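(* Let $X$ be a nontrivial real Hausdorff locally convex space, let $g\in\Gamma(X)$ be sublinear and let $x^{\ast}\in X^{\ast}$. Consider the assertions: (i) $[g\le x^{\ast}]=\{0\}$; (ii) $x^{\ast}\in\operatorname{qi}\partial g(0)$; (iii) $x^{\ast}\in\operatorname{core}\partial g(0)$; (iv) $x^{\ast}\in\operatorname{int}_\tau\partial g(0)$, where $\tau$ is a linear topology on $X^{\ast}$; (v) the topology of $X$ is defined by a norm $\|\cdot\|$ and $x^{\ast}\in\operatorname{int}_{\|\cdot\|_{\ast}}\partial g(0)$, where $\|\cdot\|_{\ast}$ is the dual norm on $X^{\ast}$; (vi) the topology of $X$ is defined by a norm $\|\cdot\|$ and there exists $\alpha>0$ such that $g(x)-\langle x,x^{\ast}\rangle\ge\alpha\|x\|$ for all $x\in X$. Then (vi) $\Leftrightarrow$ (v) $\Rightarrow$ (iv) $\Rightarrow$ (iii) $\Rightarrow$ (ii) $\Leftrightarrow$ (i); moreover, if $\dim X<\infty$ then (i) $\Rightarrow$ (vi).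
   Context: $X^{\ast}$ is the topological dual of $X$, endowed (unless another topology is indicated) with the weak$^{\ast}$ topology; $\langle x,x^{\ast}\rangle:=x^{\ast}(x)$. $\Gamma(X)$ is the set of proper lower semicontinuous convex functions. $\partial g(0)=\{u^{\ast}\in X^{\ast}: \langle x,u^{\ast}\rangle\le g(x)\ \forall x\}$. $[g\le x^{\ast}]:=\{x: g(x)\le\langle x,x^{\ast}\rangle\}$. For convex $B\subset X^{\ast}$, $\operatorname{qi}B=\{b\in B:\text{weak}^{\ast}\text{ closure of }\mathbb{R}_+(B-b)\text{ equals }X^{\ast}\}$. For a subset $A$ of a real linear space $E$, $\operatorname{core}A=\{x\in E:\forall u\in E\ \exists\delta>0\ \forall t\in[0,\delta]: x+tu\in A\}$. *)

theory Defs
  imports "HOL-Analysis.Analysis"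
begin

definition lin_top :: "'a::real_vector topology \<Rightarrow> bool" where
  "lin_top T \<longleftrightarrow> topspace T = UNIV
     \<and> continuous_map (prod_topology T T) T (\<lambda>(x,y). x + y)
     \<and> continuous_map (prod_topology euclideanreal T) T (\<lambda>(t,x). t *\<^sub>R x)"

definition hlcs :: "'a::real_vector topology \<Rightarrow> bool" where
  "hlcs T \<longleftrightarrow> lin_top T \<and> Hausdorff_space T
     \<and> (\<forall>U. openin T U \<and> 0 \<in> U \<longrightarrow> (\<exists>V. openin T V \<and> 0 \<in> V \<and> convex V \<and> V \<subseteq> U))"

definition dual :: "'a::real_vector topology \<Rightarrow> ('a \<Rightarrow> real) set" where
  "dual T = {f. linear f \<and> continuous_map T euclideanreal f}"

definition weak_star :: "'a::real_vector topology \<Rightarrow> ('a \<Rightarrow> real) topology" where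
  "weak_star T = subtopology (product_topology (\<lambda>_. euclideanreal) UNIV) (dual T)"

definition Gamma :: "'a::real_vector topology \<Rightarrow> ('a \<Rightarrow> ereal) \<Rightarrow> bool" where
  "Gamma T g \<longleftrightarrow> (\<forall>x. g x \<noteq> -\<infinity>) \<and> (\<exists>x. g x \<noteq> \<infinity>)
     \<and> (\<forall>c. closedin T {x. g x \<le> c})
     \<and> convex {(x, r::real). g x \<le> ereal r}"

definition sublinear :: "('a::real_vector \<Rightarrow> ereal) \<Rightarrow> bool" where
  "sublinear g \<longleftrightarrow> (\<forall>x y. g (x + y) \<le> g x + g y)
     \<and> (\<forall>t>0. \<forall>x. g (t *\<^sub>R x) = ereal t * g x)"

definition subdiff0 :: "'a::real_vector topology \<Rightarrow> ('a \<Rightarrow> ereal) \<Rightarrow> ('a \<Rightarrow> real) set" where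
  "subdiff0 T g = {u \<in> dual T. \<forall>x. ereal (u x) \<le> g x}"

definition below :: "('a \<Rightarrow> ereal) \<Rightarrow> ('a \<Rightarrow> real) \<Rightarrow> 'a set" where
  "below g xs = {x. g x \<le> ereal (xs x)}"

definition qi :: "'a::real_vector topology \<Rightarrow> ('a \<Rightarrow> real) set \<Rightarrow> ('a \<Rightarrow> real) set" where
  "qi T B = {b \<in> B. weak_star T closure_of
      {(\<lambda>x. t * (c x - b x)) | t c. t \<ge> 0 \<and> c \<in> B} = dual T}"

definition core_in :: "('a \<Rightarrow> real) set \<Rightarrow> ('a \<Rightarrow> real) set \<Rightarrow> ('a \<Rightarrow> real) set" where
  "core_in E A = {x \<in> E. \<forall>u \<in> E. \<exists>\<delta>>0. \<forall>t \<in> {0..\<delta>}. (\<lambda>y. x y + t * u y) \<in> A}"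

definition dual_lin_top :: "'a::real_vector topology \<Rightarrow> ('a \<Rightarrow> real) topology \<Rightarrow> bool" where
  "dual_lin_top T \<tau> \<longleftrightarrow> topspace \<tau> = dual T
     \<and> continuous_map (prod_topology \<tau> \<tau>) \<tau> (\<lambda>(f,h). (\<lambda>x. f x + h x))
     \<and> continuous_map (prod_topology euclideanreal \<tau>) \<tau> (\<lambda>(t,f). (\<lambda>x. t * f x))"

definition is_norm :: "('a::real_vector \<Rightarrow> real) \<Rightarrow> bool" where
  "is_norm N \<longleftrightarrow> (\<forall>x y. N (x + y) \<le> N x + N y) \<and> (\<forall>c x. N (c *\<^sub>R x) = \<bar>c\<bar> * N x)
     \<and> (\<forall>x. N x = 0 \<longrightarrow> x = 0)"

definition norm_top :: "('a::real_vector \<Rightarrow> real) \<Rightarrow> 'a topology" where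
  "norm_top N = topology (\<lambda>U. \<forall>x\<in>U. \<exists>e>0. \<forall>y. N (y - x) < e \<longrightarrow> y \<in> U)"

definition dual_norm :: "('a \<Rightarrow> real) \<Rightarrow> ('a \<Rightarrow> real) \<Rightarrow> real" where
  "dual_norm N f = Sup {\<bar>f x\<bar> | x. N x \<le> 1}"

end

theory Submission
  imports Defs "HOL-Library.Function_Algebras"
begin

definition sublin :: "('b::real_vector \<Rightarrow> real) \<Rightarrow> bool" where
  "sublin p \<longleftrightarrow> (\<forall>x y. p (x + y) \<le> p x + p y) \<and> (\<forall>c>0. \<forall>x. p (c *\<^sub>R x) \<le> c * p x)"

lemma sublin_add: "sublin p \<Longrightarrow> p (x + y) \<le> p x + p y"
  by (simp add: sublin_def)

lemma sublin_le: "sublin p \<Longrightarrow> c > 0 \<Longrightarrow> p (c *\<^sub>R x) \<le> c * p x"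
  by (simp add: sublin_def)

lemma sublin_hom: assumes "sublin p" "c > 0" shows "p (c *\<^sub>R x) = c * p x"
proof -
  have "p x = p (inverse c *\<^sub>R (c *\<^sub>R x))" using assms by simp
  also have "\<dots> \<le> inverse c * p (c *\<^sub>R x)" using assms by (intro sublin_le) auto
  finally have "c * p x \<le> p (c *\<^sub>R x)" using assms by (simp add: field_simps)
  with sublin_le[OF assms, of x] show ?thesis by linarith
qed

lemma sublin_0: assumes "sublin p" shows "p 0 = 0"
proof -
  have "p 0 = p ((1/2::real) *\<^sub>R 0)" by simp
  also have "\<dots> = (1/2) * p 0" using sublin_hom[OF assms, of "1/2" 0] by simp
  finally show ?thesis by simp
qed

lemma sublin_neg: assumes "sublin p" shows "- p (-x) \<le> p x"
proof -
  have "p (x + -x) \<le> p x + p (-x)" by (rule sublin_add[OF assms])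
  thus ?thesis using sublin_0[OF assms] by simp
qed

lemma HB_step:
  fixes M :: "('b::real_vector \<times> real) set"
  assumes p: "sublin p" and sub: "subspace M"
    and fn: "\<And>x a b. (x,a) \<in> M \<Longrightarrow> (x,b) \<in> M \<Longrightarrow> a = b"
    and le: "\<And>x a. (x,a) \<in> M \<Longrightarrow> a \<le> p x"
    and z: "z \<notin> fst ` M"
  shows "\<exists>M'. subspace M' \<and> (\<forall>x a b. (x,a) \<in> M' \<longrightarrow> (x,b) \<in> M' \<longrightarrow> a = b)
     \<and> (\<forall>x a. (x,a) \<in> M' \<longrightarrow> a \<le> p x) \<and> M \<subseteq> M' \<and> M' \<noteq> M"
proof -
  have M0: "(0,0) \<in> M" using sub by (simp add: subspace_def zero_prod_def)
  have Madd: "(m+m', a+a') \<in> M" if "(m,a)\<in>M" "(m',a')\<in>M" for m m' a a'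
    using sub that subspace_add[of M "(m,a)" "(m',a')"] by simp
  have Msc: "(t *\<^sub>R m, t * a) \<in> M" if "(m,a)\<in>M" for m a t
    using sub that subspace_scale[of M "(m,a)" t] by simp
  define S where "S = {a - p (m - z) | m a. (m,a) \<in> M}"
  have key: "a - p (m - z) \<le> p (m' + z) - a'" if "(m,a)\<in>M" "(m',a')\<in>M" for m a m' a'
  proof -
    have "a + a' \<le> p (m + m')" using le[OF Madd[OF that]] .
    also have "m + m' = (m - z) + (m' + z)" by simp
    also have "p \<dots> \<le> p (m - z) + p (m' + z)" by (rule sublin_add[OF p])
    finally show ?thesis by simp
  qed
  have Sne: "S \<noteq> {}" using M0 unfolding S_def by blast
  have Sbd: "bdd_above S" unfolding S_def bdd_above_def using key[OF _ M0] by auto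
  define c where "c = Sup S"
  have c1: "a - p (m - z) \<le> c" if "(m,a)\<in>M" for m a
    unfolding c_def using Sbd that by (intro cSup_upper) (auto simp: S_def)
  have c2: "c \<le> p (m' + z) - a'" if "(m',a')\<in>M" for m' a'
    unfolding c_def using Sne that key by (intro cSup_least) (auto simp: S_def)
  define M' where "M' = {(m + t *\<^sub>R z, a + t * c) | m a t. (m,a) \<in> M}"
  have subM': "subspace M'"
    unfolding subspace_def
  proof (intro conjI ballI allI)
    show "0 \<in> M'" unfolding M'_def using M0 by (auto simp: zero_prod_def intro!: exI[of _ 0])
  next
    fix u v assume "u \<in> M'" "v \<in> M'"
    then obtain m a t m' a' t' where "(m,a)\<in>M" "(m',a')\<in>M" "u = (m + t *\<^sub>R z, a + t * c)"
      "v = (m' + t' *\<^sub>R z, a' + t' * c)" unfolding M'_def by blast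
    moreover have "(m+m', a+a') \<in> M" using Madd calculation by blast
    moreover have "u + v = ((m+m') + (t+t') *\<^sub>R z, (a+a') + (t+t') * c)"
      using calculation by (simp add: algebra_simps scaleR_add_left)
    ultimately show "u + v \<in> M'" unfolding M'_def by blast
  next
    fix r u assume "u \<in> M'"
    then obtain m a t where "(m,a)\<in>M" "u = (m + t *\<^sub>R z, a + t * c)" unfolding M'_def by blast
    moreover have "(r *\<^sub>R m, r*a) \<in> M" using Msc calculation by blast
    moreover have "r *\<^sub>R u = (r *\<^sub>R m + (r*t) *\<^sub>R z, r*a + (r*t) * c)"
      using calculation by (simp add: algebra_simps scaleR_add_right)
    ultimately show "r *\<^sub>R u \<in> M'" unfolding M'_def by blast
  qed
  have fnM': "a = b" if A1: "(x,a)\<in>M'" and A2: "(x,b)\<in>M'" for x a b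
  proof -
    obtain m a0 t where h1: "(m,a0)\<in>M" "x = m + t *\<^sub>R z" "a = a0 + t * c"
      using A1 unfolding M'_def by blast
    obtain m' a0' t' where h2: "(m',a0')\<in>M" "x = m' + t' *\<^sub>R z" "b = a0' + t' * c"
      using A2 unfolding M'_def by blast
    note h = h1(1) h2(1) h1(2,3) h2(2,3)
    show ?thesis
    proof (cases "t = t'")
      case True
      have "m = m'" using h1(2) h2(2) True by simp
      then have "a0 = a0'" using fn h1(1) h2(1) by blast
      then show ?thesis using h1(3) h2(3) True by simp
    next
      case False
      have "m + t *\<^sub>R z = m' + t' *\<^sub>R z" using h1(2) h2(2) by simp
      then have "(t - t') *\<^sub>R z = m' - m" by (simp add: algebra_simps)
      then have "inverse (t - t') *\<^sub>R ((t - t') *\<^sub>R z) = inverse (t - t') *\<^sub>R (m' - m)" by simp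
      then have "z = inverse (t - t') *\<^sub>R (m' - m)" using False by simp
      moreover have "(inverse (t - t') *\<^sub>R (m' + - m), inverse (t - t') * (a0' + (-1) * a0)) \<in> M"
        using h by (intro Msc Madd) (auto intro: Msc[of m a0 "-1", simplified])
      ultimately have "z \<in> fst ` M" by (force simp: image_iff)
      then show ?thesis using z by simp
    qed
  qed
  have leM': "a \<le> p x" if A: "(x,a)\<in>M'" for x a
  proof -
    obtain m a0 t where h: "(m,a0)\<in>M" "x = m + t *\<^sub>R z" "a = a0 + t * c"
      using A unfolding M'_def by blast
    consider "t = 0" | "t > 0" | "t < 0" by linarith
    then show ?thesis
    proof cases
      case 1 then show ?thesis using h le by simp
    next
      case 2
      have "c \<le> p (inverse t *\<^sub>R m + z) - inverse t * a0" using c2 Msc[OF h(1)] by blast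
      then have "t * c \<le> t * p (inverse t *\<^sub>R m + z) - a0" using 2
        by (simp add: field_simps)
      also have "t * p (inverse t *\<^sub>R m + z) = p (t *\<^sub>R (inverse t *\<^sub>R m + z))"
        using sublin_hom[OF p 2] by simp
      also have "t *\<^sub>R (inverse t *\<^sub>R m + z) = x" using 2 h by (simp add: scaleR_add_right)
      finally show ?thesis using h by simp
    next
      case 3
      define s where "s = - t"
      have s: "s > 0" using 3 s_def by simp
      have "inverse s * a0 - p (inverse s *\<^sub>R m - z) \<le> c" using c1 Msc[OF h(1)] by blast
      then have "a0 - s * p (inverse s *\<^sub>R m - z) \<le> s * c" using s
        by (simp add: field_simps)
      also have "s * p (inverse s *\<^sub>R m - z) = p (s *\<^sub>R (inverse s *\<^sub>R m - z))"
        using sublin_hom[OF p s] by simp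
      also have "s *\<^sub>R (inverse s *\<^sub>R m - z) = x" using s h by (simp add: s_def scaleR_diff_right)
      finally show ?thesis using h by (simp add: s_def)
    qed
  qed
  have "M \<subseteq> M'" unfolding M'_def by (force intro: exI[of _ 0])
  moreover have "(z, c) \<in> M'"
  proof -
    have "(z, c) = (0 + 1 *\<^sub>R z, 0 + 1 * c)" by simp
    then show ?thesis unfolding M'_def using M0 by blast
  qed
  moreover have "(z, c) \<notin> M" using z by force
  ultimately show ?thesis using subM' fnM' leM' by blast
qed

lemma HB:
  fixes p :: "'b::real_vector \<Rightarrow> real"
  assumes p: "sublin p"
  shows "\<exists>F. linear F \<and> (\<forall>x. F x \<le> p x) \<and> F y = p y"
proof -
  define A where "A = {G :: ('b \<times> real) set. subspace G \<and> (\<forall>x a b. (x,a) \<in> G \<longrightarrow> (x,b) \<in> G \<longrightarrow> a = b)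
     \<and> (\<forall>x a. (x,a) \<in> G \<longrightarrow> a \<le> p x) \<and> (y, p y) \<in> G}"
  define G0 where "G0 = {(t *\<^sub>R y, t * p y) | t. True}"
  have p0: "p 0 = 0" by (rule sublin_0[OF p])
  have G0A: "G0 \<in> A" unfolding A_def
  proof (intro CollectI conjI allI impI)
    show "subspace G0" unfolding subspace_def
    proof (intro conjI ballI allI)
      show "0 \<in> G0" unfolding G0_def by (auto simp: zero_prod_def intro!: exI[of _ 0])
    next
      fix u v assume "u \<in> G0" "v \<in> G0"
      then obtain t s where "u = (t *\<^sub>R y, t * p y)" "v = (s *\<^sub>R y, s * p y)" unfolding G0_def by auto
      then have "u + v = ((t+s) *\<^sub>R y, (t+s) * p y)" by (simp add: algebra_simps scaleR_add_left)
      then show "u + v \<in> G0" unfolding G0_def by blast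
    next
      fix c u assume "u \<in> G0"
      then obtain t where "u = (t *\<^sub>R y, t * p y)" unfolding G0_def by auto
      then have "c *\<^sub>R u = ((c*t) *\<^sub>R y, (c*t) * p y)" by simp
      then show "c *\<^sub>R u \<in> G0" unfolding G0_def by blast
    qed
    show "(y, p y) \<in> G0" unfolding G0_def by (auto intro!: exI[of _ 1])
  next
    fix x a b assume "(x,a) \<in> G0" "(x,b) \<in> G0"
    obtain t where h1: "x = t *\<^sub>R y" "a = t * p y" using \<open>(x,a) \<in> G0\<close> unfolding G0_def by auto
    obtain s where h2: "x = s *\<^sub>R y" "b = s * p y" using \<open>(x,b) \<in> G0\<close> unfolding G0_def by auto
    note h = h1 h2
    show "a = b"
    proof (cases "y = 0")
      case True then show ?thesis using h p0 by simp
    next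
      case False
      have "t *\<^sub>R y = s *\<^sub>R y" by (metis h1(1) h2(1))
      then have "t = s" using False by simp
      then show ?thesis using h by simp
    qed
  next
    fix x a assume "(x,a) \<in> G0"
    then obtain t where h: "x = t *\<^sub>R y" "a = t * p y" unfolding G0_def by auto
    consider "t = 0" | "t > 0" | "t < 0" by linarith
    then show "a \<le> p x"
    proof cases
      case 1 then show ?thesis using h p0 by simp
    next
      case 2 then show ?thesis using h sublin_hom[OF p 2] by simp
    next
      case 3
      have "x = (-t) *\<^sub>R (-y)" using h(1) by simp
      then have px: "p x = (-t) * p (-y)" using sublin_hom[OF p, of "-t" "-y"] 3 by simp
      have "- p (-y) \<le> p y" by (rule sublin_neg[OF p])
      then have "t * p y \<le> t * (- p (-y))" using 3 by (intro mult_left_mono_neg) auto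
      then show ?thesis using h(2) px by simp
    qed
  qed
  have "\<exists>M\<in>A. \<forall>X\<in>A. M \<subseteq> X \<longrightarrow> X = M"
  proof (rule Zorn_Lemma2, intro ballI)
    fix C assume C: "C \<in> chains A"
    have CA: "C \<subseteq> A" by (rule chainsD2[OF C])
    have ch: "\<And>X Y. X \<in> C \<Longrightarrow> Y \<in> C \<Longrightarrow> X \<subseteq> Y \<or> Y \<subseteq> X"
      by (rule chainsD[OF C])
    show "\<exists>U\<in>A. \<forall>X\<in>C. X \<subseteq> U"
    proof (cases "C = {}")
      case True then show ?thesis using G0A by blast
    next
      case False
      have XA: "subspace X" "\<And>x a b. (x,a) \<in> X \<Longrightarrow> (x,b) \<in> X \<Longrightarrow> a = b"
        "\<And>x a. (x,a) \<in> X \<Longrightarrow> a \<le> p x" "(y, p y) \<in> X" if "X \<in> C" for X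
        using CA that unfolding A_def by blast+
      have two: "\<exists>X\<in>C. u \<in> X \<and> v \<in> X" if U1: "u \<in> \<Union>C" and U2: "v \<in> \<Union>C" for u v
      proof -
        obtain X Y where "X \<in> C" "Y \<in> C" "u \<in> X" "v \<in> Y" using U1 U2 by blast
        then show ?thesis using ch[of X Y] by blast
      qed
      obtain X0 where X0: "X0 \<in> C" using False by blast
      have "\<Union>C \<in> A" unfolding A_def
      proof (intro CollectI conjI allI impI)
        show "subspace (\<Union>C)" unfolding subspace_def
        proof (intro conjI ballI allI)
          show "0 \<in> \<Union>C" using X0 XA(1)[OF X0] subspace_0 by blast
        next
          fix u v assume "u \<in> \<Union>C" "v \<in> \<Union>C"
          then obtain X where "X \<in> C" "u \<in> X" "v \<in> X" using two by blast
          then show "u + v \<in> \<Union>C" using XA(1) subspace_add by blast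
        next
          fix c u assume "u \<in> \<Union>C"
          then obtain X where "X \<in> C" "u \<in> X" by blast
          then show "c *\<^sub>R u \<in> \<Union>C" using XA(1) subspace_scale by blast
        qed
        show "(y, p y) \<in> \<Union>C" using X0 XA(4)[OF X0] by blast
      next
        fix x a b assume "(x,a) \<in> \<Union>C" "(x,b) \<in> \<Union>C"
        then obtain X where "X \<in> C" "(x,a) \<in> X" "(x,b) \<in> X" using two by blast
        then show "a = b" using XA(2) by blast
      next
        fix x a assume "(x,a) \<in> \<Union>C"
        then obtain X where "X \<in> C" "(x,a) \<in> X" by blast
        then show "a \<le> p x" using XA(3) by blast
      qed
      then show ?thesis by blast
    qed
  qed
  then obtain M where MA: "M \<in> A" and Mmax: "\<And>X. X \<in> A \<Longrightarrow> M \<subseteq> X \<Longrightarrow> X = M" by blast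
  have sub: "subspace M" and fn: "\<And>x a b. (x,a) \<in> M \<Longrightarrow> (x,b) \<in> M \<Longrightarrow> a = b"
    and le: "\<And>x a. (x,a) \<in> M \<Longrightarrow> a \<le> p x" and yM: "(y, p y) \<in> M"
    using MA by (auto simp: A_def)
  have full: "x \<in> fst ` M" for x
  proof (rule ccontr)
    assume nx: "x \<notin> fst ` M"
    have "\<exists>M'. subspace M' \<and> (\<forall>x a b. (x,a) \<in> M' \<longrightarrow> (x,b) \<in> M' \<longrightarrow> a = b)
     \<and> (\<forall>x a. (x,a) \<in> M' \<longrightarrow> a \<le> p x) \<and> M \<subseteq> M' \<and> M' \<noteq> M"
      apply (rule HB_step[OF p sub])
        apply (rule fn, assumption, assumption)
       apply (rule le, assumption)
      apply (rule nx)
      done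
    then obtain M' where "subspace M'"
      "\<forall>x a b. (x,a) \<in> M' \<longrightarrow> (x,b) \<in> M' \<longrightarrow> a = b" "\<forall>x a. (x,a) \<in> M' \<longrightarrow> a \<le> p x"
      "M \<subseteq> M'" "M' \<noteq> M" by blast
    moreover then have "M' \<in> A" using yM unfolding A_def by blast
    ultimately show False using Mmax by blast
  qed
  define F where "F x = (THE a. (x,a) \<in> M)" for x
  have FM: "(x, F x) \<in> M" for x
  proof -
    obtain a where a: "(x,a) \<in> M" using full[of x] by force
    have "(x, THE a. (x,a) \<in> M) \<in> M"
      by (rule theI[of "\<lambda>b. (x,b) \<in> M", OF a]) (rule fn[OF _ a])
    then show ?thesis unfolding F_def .
  qed
  have Feq: "F x = a" if "(x,a) \<in> M" for x a using fn[OF FM that] .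
  have "linear F"
  proof (rule linearI)
    fix x1 x2
    have "(x1 + x2, F x1 + F x2) \<in> M" using subspace_add[OF sub FM FM] by simp
    then show "F (x1 + x2) = F x1 + F x2" by (rule Feq)
  next
    fix r x
    have "(r *\<^sub>R x, r * F x) \<in> M" using subspace_scale[OF sub FM, of r] by simp
    then show "F (r *\<^sub>R x) = r *\<^sub>R F x" using Feq by simp
  qed
  moreover have "F x \<le> p x" for x using le[OF FM] .
  moreover have "F y = p y" using Feq[OF yM] .
  ultimately show ?thesis by blast
qed

lemma lt_top: "lin_top T \<Longrightarrow> topspace T = UNIV" by (simp add: lin_top_def)

lemma lt_add: assumes "lin_top T" shows "continuous_map T T (\<lambda>x. x + a)"
proof -
  have "continuous_map T (prod_topology T T) (\<lambda>x. (x, a))"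
    using assms by (intro continuous_map_pairedI) (auto simp: lin_top_def)
  moreover have "continuous_map (prod_topology T T) T (\<lambda>(x,y). x + y)"
    using assms by (simp add: lin_top_def)
  ultimately have "continuous_map T T ((\<lambda>(x,y). x + y) \<circ> (\<lambda>x. (x, a)))"
    by (rule continuous_map_compose)
  then show ?thesis by (simp add: o_def)
qed

lemma lt_scale: assumes "lin_top T" shows "continuous_map T T (\<lambda>x. c *\<^sub>R x)"
proof -
  have "continuous_map T (prod_topology euclideanreal T) (\<lambda>x. (c, x))"
    using assms by (intro continuous_map_pairedI) (auto simp: lin_top_def)
  moreover have "continuous_map (prod_topology euclideanreal T) T (\<lambda>(t,x). t *\<^sub>R x)"
    using assms by (simp add: lin_top_def)
  ultimately have "continuous_map T T ((\<lambda>(t,x). t *\<^sub>R x) \<circ> (\<lambda>x. (c, x)))"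
    by (rule continuous_map_compose)
  then show ?thesis by (simp add: o_def)
qed

lemma lt_ray: assumes "lin_top T" shows "continuous_map euclideanreal T (\<lambda>t. t *\<^sub>R x)"
proof -
  have "continuous_map euclideanreal (prod_topology euclideanreal T) (\<lambda>t. (t, x))"
    using assms by (intro continuous_map_pairedI) (auto simp: lin_top_def)
  moreover have "continuous_map (prod_topology euclideanreal T) T (\<lambda>(t,x). t *\<^sub>R x)"
    using assms by (simp add: lin_top_def)
  ultimately have "continuous_map euclideanreal T ((\<lambda>(t,x). t *\<^sub>R x) \<circ> (\<lambda>t. (t, x)))"
    by (rule continuous_map_compose)
  then show ?thesis by (simp add: o_def)
qed

lemma lt_pre: assumes "lin_top T" "continuous_map T T f" "openin T U"
  shows "openin T {x. f x \<in> U}"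
  using openin_continuous_map_preimage[OF assms(2,3)] lt_top[OF assms(1)] by simp

lemma lt_pre_real: assumes "lin_top T" "continuous_map T euclideanreal f" "open U"
  shows "openin T {x. f x \<in> U}"
  using openin_continuous_map_preimage[OF assms(2), of U] assms lt_top[OF assms(1)] by simp

lemma lt_ray_small: assumes "lin_top T" "openin T V" "0 \<in> V"
  shows "\<exists>e>0. \<forall>t. \<bar>t\<bar> < e \<longrightarrow> t *\<^sub>R x \<in> V"
proof -
  have "openin euclideanreal {t. t *\<^sub>R x \<in> V}"
    using openin_continuous_map_preimage[OF lt_ray[OF assms(1)] assms(2), of x] by simp
  then have "open {t. t *\<^sub>R x \<in> V}" by simp
  moreover have "(0::real) \<in> {t. t *\<^sub>R x \<in> V}" using assms by simp
  ultimately obtain e where "e > 0" "ball 0 e \<subseteq> {t. t *\<^sub>R x \<in> V}"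
    using open_contains_ball by blast
  then show ?thesis by (intro exI[of _ e]) (auto simp: dist_real_def subset_iff)
qed

lemma lt_absorb: assumes "lin_top T" "openin T V" "0 \<in> V"
  shows "\<exists>t>0. inverse t *\<^sub>R x \<in> V"
proof -
  obtain e where e: "e > 0" "\<And>t. \<bar>t\<bar> < e \<Longrightarrow> t *\<^sub>R x \<in> V" using lt_ray_small[OF assms] by blast
  have "inverse (2 / e) *\<^sub>R x \<in> V" using e by (intro e(2)) auto
  moreover have "2 / e > 0" using e by simp
  ultimately show ?thesis by blast
qed

lemma hlcs_nbhd: assumes "hlcs T" "openin T U" "0 \<in> U"
  shows "\<exists>V. openin T V \<and> 0 \<in> V \<and> convex V \<and> (\<forall>v\<in>V. -v \<in> V) \<and> V \<subseteq> U"
proof -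
  have lt: "lin_top T" using assms by (simp add: hlcs_def)
  have "\<forall>U. openin T U \<and> 0 \<in> U \<longrightarrow> (\<exists>V. openin T V \<and> 0 \<in> V \<and> convex V \<and> V \<subseteq> U)"
    using assms(1) by (simp add: hlcs_def)
  then obtain V0 where V0: "openin T V0" "0 \<in> V0" "convex V0" "V0 \<subseteq> U"
    using assms(2,3) by blast
  define V where "V = V0 \<inter> {x. (-1) *\<^sub>R x \<in> V0}"
  have "openin T {x. (-1) *\<^sub>R x \<in> V0}" using lt_pre[OF lt lt_scale[OF lt] V0(1)] by blast
  then have "openin T V" unfolding V_def using V0(1) by (rule openin_Int[rotated])
  moreover have "0 \<in> V" using V0 by (simp add: V_def)
  moreover have "convex {x. (-1) *\<^sub>R x \<in> V0}"
  proof (rule convexI)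
    fix x y u v assume "x \<in> {x. (-1) *\<^sub>R x \<in> V0}" "y \<in> {x. (-1) *\<^sub>R x \<in> V0}" "0 \<le> u" "0 \<le> v" "u + v = (1::real)"
    then have "u *\<^sub>R (-x) + v *\<^sub>R (-y) \<in> V0" using convexD[OF V0(3), of "-x" "-y" u v] by simp
    then show "u *\<^sub>R x + v *\<^sub>R y \<in> {x. (-1) *\<^sub>R x \<in> V0}" by (simp add: algebra_simps)
  qed
  then have "convex V" using V0(3) by (simp add: V_def convex_Int)
  moreover have "\<forall>v\<in>V. -v \<in> V" by (auto simp: V_def)
  moreover have "V \<subseteq> U" using V0 by (auto simp: V_def)
  ultimately show ?thesis by blast
qed

lemma cont_real_crit:
  assumes "\<And>x e. x \<in> topspace X \<Longrightarrow> e > 0 \<Longrightarrow> \<exists>W. openin X W \<and> x \<in> W \<and> (\<forall>y\<in>W. \<bar>f y - f x\<bar> < e)"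
  shows "continuous_map X euclideanreal f"
  unfolding continuous_map_def
proof (intro conjI allI impI)
  show "f \<in> topspace X \<rightarrow> topspace euclideanreal" by simp
  fix U assume "openin euclideanreal U"
  then have U: "open U" by simp
  show "openin X {x \<in> topspace X. f x \<in> U}"
  proof (subst openin_subopen, intro ballI)
    fix x assume x: "x \<in> {x \<in> topspace X. f x \<in> U}"
    then have x1: "x \<in> topspace X" and x2: "f x \<in> U" by auto
    have "\<exists>e>0. ball (f x) e \<subseteq> U" using U x2 unfolding open_contains_ball by blast
    then obtain e where e: "e > 0" "ball (f x) e \<subseteq> U" by blast
    obtain W where W: "openin X W" "x \<in> W" "\<forall>y\<in>W. \<bar>f y - f x\<bar> < e" using assms[OF x1 e(1)] by blast
    have "W \<subseteq> {x \<in> topspace X. f x \<in> U}"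
    proof
      fix y assume y: "y \<in> W"
      then have "y \<in> topspace X" using openin_subset[OF W(1)] by blast
      moreover have "f y \<in> ball (f x) e" using W(3) y by (simp add: dist_real_def abs_minus_commute[of "f x"])
      ultimately show "y \<in> {x \<in> topspace X. f x \<in> U}" using e(2) by blast
    qed
    then show "\<exists>T. openin X T \<and> x \<in> T \<and> T \<subseteq> {x \<in> topspace X. f x \<in> U}" using W by blast
  qed
qed

lemma lin_cont:
  assumes lt: "lin_top T" and F: "linear F" and V: "openin T V" "0 \<in> V" "\<forall>v\<in>V. -v \<in> V"
    and bd: "\<forall>v\<in>V. F v \<le> C"
  shows "continuous_map T euclideanreal F"
proof (rule cont_real_crit)
  fix x :: 'a and e :: real assume e: "e > 0"
  have "F 0 \<le> C" using bd V(2) by blast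
  then have C: "C \<ge> 0" using linear_0[OF F] by simp
  define r where "r = e / (C + 1)"
  have r: "r > 0" using C e by (simp add: r_def)
  define W where "W = {y. inverse r *\<^sub>R (y + - x) \<in> V}"
  have "openin T W" unfolding W_def
    using lt_pre[OF lt continuous_map_compose[OF lt_add[OF lt, of "-x"] lt_scale[OF lt, of "inverse r"]] V(1)]
    by (simp add: o_def)
  moreover have "x \<in> W" using V by (simp add: W_def)
  moreover have "\<bar>F y - F x\<bar> < e" if "y \<in> W" for y
  proof -
    have v: "inverse r *\<^sub>R (y - x) \<in> V" using that by (simp add: W_def)
    have "F (inverse r *\<^sub>R (y - x)) = inverse r * (F y - F x)"
      using F by (simp add: linear_scale linear_diff)
    moreover have "F (- (inverse r *\<^sub>R (y - x))) = - (inverse r * (F y - F x))"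
      using F by (simp add: linear_scale linear_diff linear_neg)
    moreover have "F (inverse r *\<^sub>R (y - x)) \<le> C" using bd v by blast
    moreover have "F (- (inverse r *\<^sub>R (y - x))) \<le> C" using bd V(3) v by blast
    ultimately have "inverse r * (F y - F x) \<le> C" "- (inverse r * (F y - F x)) \<le> C"
      by simp_all
    then have "\<bar>inverse r * (F y - F x)\<bar> \<le> C" by linarith
    then have "\<bar>F y - F x\<bar> \<le> C * r" using r by (simp add: abs_mult field_simps)
    also have "C * r < e" using C e by (simp add: r_def field_simps)
    finally show ?thesis .
  qed
  ultimately show "\<exists>W. openin T W \<and> x \<in> W \<and> (\<forall>y\<in>W. \<bar>F y - F x\<bar> < e)" by blast
qed

definition mink :: "'a::real_vector set \<Rightarrow> 'a \<Rightarrow> real" where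
  "mink V x = Inf {t. t > 0 \<and> inverse t *\<^sub>R x \<in> V}"

definition absorbing :: "'a::real_vector set \<Rightarrow> bool" where
  "absorbing V \<longleftrightarrow> (\<forall>x. \<exists>t>0. inverse t *\<^sub>R x \<in> V)"

lemma lt_absorbing: "lin_top T \<Longrightarrow> openin T V \<Longrightarrow> 0 \<in> V \<Longrightarrow> absorbing V"
  unfolding absorbing_def using lt_absorb by blast

context
  fixes V :: "'a::real_vector set"
  assumes cv: "convex V" and V0: "0 \<in> V" and ab: "absorbing V"
begin

lemma mk_ne: "{t. t > 0 \<and> inverse t *\<^sub>R x \<in> V} \<noteq> {}"
  using ab unfolding absorbing_def by auto

lemma mk_bdd: "bdd_below {t. t > 0 \<and> inverse t *\<^sub>R x \<in> V}"
  by (rule bdd_belowI[of _ 0]) auto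

lemma mk_up: assumes "t > 0" "inverse t *\<^sub>R x \<in> V" "s \<ge> t" shows "inverse s *\<^sub>R x \<in> V"
proof -
  have s: "s > 0" using assms by simp
  have "(t/s) *\<^sub>R (inverse t *\<^sub>R x) + (1 - t/s) *\<^sub>R 0 \<in> V"
    using assms s by (intro convexD[OF cv]) (auto simp: V0)
  then have m: "(t/s) *\<^sub>R (inverse t *\<^sub>R x) \<in> V" by (simp only: scaleR_zero_right add_0_right)
  have e1: "(t/s) * inverse t = inverse s" using assms s by (simp add: field_simps)
  have "(t/s) *\<^sub>R (inverse t *\<^sub>R x) = inverse s *\<^sub>R x" by (simp only: scaleR_scaleR e1)
  then show ?thesis using m by (simp only:)
qed

lemma mk_nonneg: "0 \<le> mink V x"
  unfolding mink_def by (rule cInf_greatest[OF mk_ne]) auto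

lemma mk_le: "t > 0 \<Longrightarrow> inverse t *\<^sub>R x \<in> V \<Longrightarrow> mink V x \<le> t"
  unfolding mink_def by (rule cInf_lower[OF _ mk_bdd]) auto

lemma mk_gt: assumes "s > mink V x" shows "s > 0" "inverse s *\<^sub>R x \<in> V"
proof -
  show "s > 0" using assms mk_nonneg[of x] by linarith
  obtain t where t: "t \<in> {t. t > 0 \<and> inverse t *\<^sub>R x \<in> V}" "t < s"
    using cInf_lessD[OF mk_ne assms[unfolded mink_def]] by blast
  then show "inverse s *\<^sub>R x \<in> V" using mk_up[of t x s] by simp
qed

lemma mk_lt1: "mink V x < 1 \<Longrightarrow> x \<in> V"
  using mk_gt(2)[of x 1] by simp

lemma mk_in: "x \<in> V \<Longrightarrow> mink V x \<le> 1"
  using mk_le[of 1 x] by simp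

lemma mk_sublin: "sublin (mink V)"
  unfolding sublin_def
proof (intro conjI allI impI)
  fix x y
  show "mink V (x + y) \<le> mink V x + mink V y"
  proof (rule field_le_epsilon)
    fix e :: real assume e: "e > 0"
    define s where "s = mink V x + e/2"
    define t where "t = mink V y + e/2"
    have s: "s > 0" "inverse s *\<^sub>R x \<in> V" using mk_gt[of x s] e by (auto simp: s_def)
    have t: "t > 0" "inverse t *\<^sub>R y \<in> V" using mk_gt[of y t] e by (auto simp: t_def)
    have "(s/(s+t)) *\<^sub>R (inverse s *\<^sub>R x) + (t/(s+t)) *\<^sub>R (inverse t *\<^sub>R y) \<in> V"
      using s t by (intro convexD[OF cv]) (simp_all add: add_divide_distrib[symmetric])
    moreover have "(s/(s+t)) * inverse s = inverse (s+t)" "(t/(s+t)) * inverse t = inverse (s+t)"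
      using s t by (simp_all add: field_simps)
    then have "(s/(s+t)) *\<^sub>R (inverse s *\<^sub>R x) = inverse (s+t) *\<^sub>R x"
      "(t/(s+t)) *\<^sub>R (inverse t *\<^sub>R y) = inverse (s+t) *\<^sub>R y" by (simp_all only: scaleR_scaleR)
    ultimately have "inverse (s+t) *\<^sub>R (x + y) \<in> V" by (simp only: scaleR_add_right)
    then have "mink V (x + y) \<le> s + t" using s t by (intro mk_le) auto
    then show "mink V (x + y) \<le> mink V x + mink V y + e" by (simp add: s_def t_def)
  qed
next
  fix c :: real and x assume c: "c > 0"
  show "mink V (c *\<^sub>R x) \<le> c * mink V x"
  proof (rule field_le_epsilon)
    fix e :: real assume e: "e > 0"
    define s where "s = mink V x + e / c"
    have s: "s > 0" "inverse s *\<^sub>R x \<in> V" using mk_gt[of x s] e c by (auto simp: s_def)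
    have "inverse (c * s) * c = inverse s" using c s by (simp add: field_simps)
    then have "inverse (c * s) *\<^sub>R (c *\<^sub>R x) = inverse s *\<^sub>R x" by (simp only: scaleR_scaleR)
    then have "inverse (c * s) *\<^sub>R (c *\<^sub>R x) \<in> V" using s(2) by (simp only:)
    then have "mink V (c *\<^sub>R x) \<le> c * s" using s c by (intro mk_le) auto
    moreover have "c * s = c * mink V x + e" using c by (simp add: s_def field_simps)
    ultimately show "mink V (c *\<^sub>R x) \<le> c * mink V x + e" by linarith
  qed
qed

end

lemma lin_add: "linear f \<Longrightarrow> linear h \<Longrightarrow> linear (\<lambda>x. (f x::real) + h x)"
  by (rule linearI) (simp_all add: linear_add linear_scale algebra_simps)

lemma lin_diff: "linear f \<Longrightarrow> linear h \<Longrightarrow> linear (\<lambda>x. (f x::real) - h x)"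
  by (rule linearI) (simp_all add: linear_add linear_scale algebra_simps)

lemma lin_cmul: "linear f \<Longrightarrow> linear (\<lambda>x. c * (f x::real))"
  by (rule linearI) (simp_all add: linear_add linear_scale algebra_simps)

lemma dual_add: "f \<in> dual T \<Longrightarrow> h \<in> dual T \<Longrightarrow> (\<lambda>x. f x + h x) \<in> dual T"
  unfolding dual_def by (auto intro!: lin_add continuous_map_add)

lemma dual_scale: "f \<in> dual T \<Longrightarrow> (\<lambda>x. c * f x) \<in> dual T"
  unfolding dual_def by (auto intro!: lin_cmul continuous_map_real_mult_left)

lemma dual_diff: "f \<in> dual T \<Longrightarrow> h \<in> dual T \<Longrightarrow> (\<lambda>x. f x - h x) \<in> dual T"
  unfolding dual_def by (auto intro!: lin_diff continuous_map_diff)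

lemma dual_0: "(\<lambda>x. 0) \<in> dual T"
  unfolding dual_def by (auto intro!: linear_zero)

lemma dual_lin: "f \<in> dual T \<Longrightarrow> linear f" by (simp add: dual_def)
lemma dual_cont: "f \<in> dual T \<Longrightarrow> continuous_map T euclideanreal f" by (simp add: dual_def)

locale setting =
  fixes T :: "'a::real_vector topology" and g :: "'a \<Rightarrow> ereal"
  assumes hl: "hlcs T" and G: "Gamma T g" and sl: "sublinear g"
begin

lemma lt: "lin_top T" using hl by (simp add: hlcs_def)

lemma g_add: "g (x + y) \<le> g x + g y" using sl by (simp add: sublinear_def)
lemma g_hom: "t > 0 \<Longrightarrow> g (t *\<^sub>R x) = ereal t * g x" using sl by (simp add: sublinear_def)
lemma g_nm: "g x \<noteq> -\<infinity>" using G by (simp add: Gamma_def)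
lemma g_closed: "closedin T {x. g x \<le> c}" using G by (simp add: Gamma_def)
lemma g_open: "openin T {x. c < g x}"
proof -
  have "openin T (topspace T - {x. g x \<le> c})" using g_closed[of c] by (rule openin_diff[OF openin_topspace])
  moreover have "topspace T - {x. g x \<le> c} = {x. c < g x}" using lt_top[OF lt] by auto
  ultimately show ?thesis by simp
qed

lemma g_fin: "g y \<noteq> \<infinity> \<Longrightarrow> g y = ereal (real_of_ereal (g y))"
  using g_nm[of y] by (intro ereal_real'[symmetric]) auto

lemma g0: "g 0 = 0"
proof -
  obtain x where x: "g x \<noteq> \<infinity>" using G by (auto simp: Gamma_def)
  define r where "r = real_of_ereal (g x)"
  have gx: "g x = ereal r" using g_fin[OF x] by (simp add: r_def)
  have ne: "g 0 \<noteq> \<infinity>"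
  proof
    assume inf: "g 0 = \<infinity>"
    have "openin T {y. ereal (\<bar>r\<bar> + 1) < g y}" by (rule g_open)
    moreover have "0 \<in> {y. ereal (\<bar>r\<bar> + 1) < g y}" using inf by simp
    ultimately obtain e where e: "e > 0" "\<And>t. \<bar>t\<bar> < e \<Longrightarrow> t *\<^sub>R x \<in> {y. ereal (\<bar>r\<bar> + 1) < g y}"
      using lt_ray_small[OF lt] by blast
    define t where "t = min (e/2) (1/2)"
    have t: "t > 0" "\<bar>t\<bar> < e" "t \<le> 1" using e by (auto simp: t_def)
    have "g (t *\<^sub>R x) = ereal (t * r)" using g_hom[OF t(1)] gx by simp
    moreover have "t * r \<le> \<bar>r\<bar> + 1"
    proof -
      have "t * r \<le> t * \<bar>r\<bar>" using t by (intro mult_left_mono) auto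
      also have "\<dots> \<le> 1 * \<bar>r\<bar>" using t by (intro mult_right_mono) auto
      finally show ?thesis by simp
    qed
    ultimately show False using e(2)[OF t(2)] by simp
  qed
  have "g 0 = g ((2::real) *\<^sub>R 0)" by simp
  also have "\<dots> = ereal 2 * g 0" by (rule g_hom) simp
  finally have eq: "g 0 = ereal 2 * g 0" .
  obtain a where a: "g 0 = ereal a" using ne g_nm[of 0] by (cases "g 0") auto
  then have "a = 2 * a" using eq by simp
  then show ?thesis using a by (simp add: zero_ereal_def)
qed

lemma sep_point: assumes x0: "x0 \<noteq> 0" shows "\<exists>F\<in>dual T. F x0 \<ge> 1"
proof -
  have "Hausdorff_space T" using hl by (simp add: hlcs_def)
  then have H: "\<forall>x y. x \<in> topspace T \<and> y \<in> topspace T \<and> x \<noteq> y \<longrightarrow>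
      (\<exists>U V. openin T U \<and> openin T V \<and> x \<in> U \<and> y \<in> V \<and> disjnt U V)"
    unfolding Hausdorff_space_def by simp
  have "0 \<in> topspace T \<and> x0 \<in> topspace T \<and> 0 \<noteq> x0" using x0 lt_top[OF lt] by simp
  with H have "\<exists>U V. openin T U \<and> openin T V \<and> 0 \<in> U \<and> x0 \<in> V \<and> disjnt U V" by blast
  then obtain U W where UW: "openin T U" "openin T W" "0 \<in> U" "x0 \<in> W" "disjnt U W" by blast
  obtain V where V: "openin T V" "0 \<in> V" "convex V" "\<forall>v\<in>V. -v \<in> V" "V \<subseteq> U"
    using hlcs_nbhd[OF hl UW(1,3)] by blast
  have ab: "absorbing V" by (rule lt_absorbing[OF lt V(1,2)])
  have x0V: "x0 \<notin> V" using V(5) UW(4,5) by (auto simp: disjnt_def)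
  obtain F where F: "linear F" "\<And>x. F x \<le> mink V x" "F x0 = mink V x0"
    using HB[OF mk_sublin[OF V(3,2) ab], of x0] by blast
  have "mink V x0 \<ge> 1" using mk_lt1[OF V(3,2) ab, of x0] x0V by linarith
  moreover have "continuous_map T euclideanreal F"
  proof (rule lin_cont[OF lt F(1) V(1,2,4)])
    show "\<forall>v\<in>V. F v \<le> 1"
    proof
      fix v assume "v \<in> V"
      then have "mink V v \<le> 1" by (rule mk_in[OF V(3,2) ab])
      then show "F v \<le> 1" using F(2)[of v] by linarith
    qed
  qed
  ultimately have "F \<in> dual T" "F x0 \<ge> 1" using F unfolding dual_def by auto
  then show ?thesis by blast
qed

end

context setting
begin

lemma fenchel:
  assumes xs: "xs \<in> subdiff0 T g" and gx: "ereal a < g x"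
  shows "\<exists>c\<in>subdiff0 T g. c x > a"
proof -
  have xsd: "xs \<in> dual T" and xsg: "\<And>y. ereal (xs y) \<le> g y" using xs by (auto simp: subdiff0_def)
  have xsl: "linear xs" using xsd by (rule dual_lin)
  obtain a' where a': "a < a'" "ereal a' < g x"
  proof (cases "g x = \<infinity>")
    case True then show ?thesis using that[of "a+1"] by simp
  next
    case False
    then have "g x = ereal (real_of_ereal (g x))" by (rule g_fin)
    then show ?thesis using that[of "(a + real_of_ereal (g x))/2"] gx by (cases "g x") auto
  qed
  define Oset where "Oset = {y. ereal a' < g y}"
  have Oo: "openin T Oset" unfolding Oset_def by (rule g_open)
  define U0 where "U0 = {u. u + x \<in> Oset} \<inter> {u. xs u \<in> {-1<..<1}}"
  have "openin T U0" unfolding U0_def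
    using lt_pre[OF lt lt_add[OF lt] Oo] lt_pre_real[OF lt dual_cont[OF xsd], of "{-1<..<1}"]
    by (intro openin_Int) auto
  moreover have "0 \<in> U0" using a' linear_0[OF xsl] by (simp add: U0_def Oset_def)
  ultimately obtain V where V: "openin T V" "0 \<in> V" "convex V" "\<forall>v\<in>V. -v \<in> V" "V \<subseteq> U0"
    using hlcs_nbhd[OF hl] by blast
  have ab: "absorbing V" by (rule lt_absorbing[OF lt V(1,2)])
  note mk = mk_nonneg[OF V(3,2) ab] mk_gt[OF V(3,2) ab] mk_le[OF V(3,2) ab]
  have msl: "sublin (mink V)" by (rule mk_sublin[OF V(3,2) ab])
  have xs_mk: "xs u \<le> mink V u" for u
  proof (rule field_le_epsilon)
    fix e :: real assume e: "e > 0"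
    define s where "s = mink V u + e"
    have s: "s > 0" "inverse s *\<^sub>R u \<in> V" using mk(2,3)[of u s] e by (auto simp: s_def)
    then have "xs (inverse s *\<^sub>R u) < 1" using V(5) by (auto simp: U0_def)
    then have "inverse s * xs u < 1" using linear_scale[OF xsl] by simp
    then have "xs u < s" using s by (simp add: field_simps)
    then show "xs u \<le> mink V u + e" by (simp add: s_def)
  qed
  define M where "M = max 2 (a - xs x + 2)"
  have M: "M \<ge> 2" "M - 1 \<ge> a - xs x + 1" by (auto simp: M_def)
  define D where "D = {y. g y \<noteq> \<infinity>}"
  define gr where "gr y = real_of_ereal (g y)" for y
  have grD: "y \<in> D \<Longrightarrow> g y = ereal (gr y)" for y unfolding D_def gr_def by (rule g_fin) simp
  have grx: "y \<in> D \<Longrightarrow> xs y \<le> gr y" for y using xsg[of y] grD[of y] by simp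
  define val where "val v y = gr y + M * mink V (v - y)" for v y
  define q where "q v = (INF y\<in>D. val v y)" for v
  have D0: "0 \<in> D" using g0 by (simp add: D_def)
  have gr0: "gr 0 = 0" using g0 by (simp add: gr_def)
  have Dne: "D \<noteq> {}" using D0 by blast
  have vallow: "xs v \<le> val v y" if "y \<in> D" for v y
  proof -
    have "xs (v - y) \<le> mink V (v - y)" by (rule xs_mk)
    also have "\<dots> = 1 * mink V (v - y)" by simp
    also have "\<dots> \<le> M * mink V (v - y)" using M mk(1)[of "v - y"]
      by (intro mult_right_mono) auto
    finally have "xs v - xs y \<le> M * mink V (v - y)" using linear_diff[OF xsl] by simp
    then show ?thesis using grx[OF that] by (simp add: val_def)
  qed
  have bdd: "bdd_below ((val v) ` D)" for v
    by (rule bdd_belowI[of _ "xs v"]) (use vallow in auto)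
  have q_le: "q v \<le> val v y" if "y \<in> D" for v y
    unfolding q_def by (rule cINF_lower[OF bdd that])
  have q_lt: "\<exists>y\<in>D. val v y < q v + e" if "e > 0" for v e
  proof -
    have "q v < q v + e" using that by simp
    then show ?thesis unfolding q_def using cINF_less_iff[OF Dne bdd] by blast
  qed
  have qsl: "sublin q"
    unfolding sublin_def
  proof (intro conjI allI impI)
    fix v w
    show "q (v + w) \<le> q v + q w"
    proof (rule field_le_epsilon)
      fix e :: real assume e: "e > 0"
      obtain y1 where y1: "y1 \<in> D" "val v y1 < q v + e/2" using q_lt[of "e/2" v] e by auto
      obtain y2 where y2: "y2 \<in> D" "val w y2 < q w + e/2" using q_lt[of "e/2" w] e by auto
      have "g (y1 + y2) \<le> ereal (gr y1) + ereal (gr y2)" using g_add[of y1 y2] grD[OF y1(1)] grD[OF y2(1)] by simp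
      then have gle: "g (y1 + y2) \<le> ereal (gr y1 + gr y2)" by simp
      then have y12: "y1 + y2 \<in> D" by (auto simp: D_def)
      have "gr (y1 + y2) \<le> gr y1 + gr y2" using gle grD[OF y12] by simp
      moreover have "mink V (v + w - (y1 + y2)) \<le> mink V (v - y1) + mink V (w - y2)"
        using sublin_add[OF msl, of "v - y1" "w - y2"] by (simp add: algebra_simps)
      moreover have "M * mink V (v + w - (y1 + y2)) \<le> M * (mink V (v - y1) + mink V (w - y2))"
        using M calculation(2) by (intro mult_left_mono) auto
      ultimately have "val (v + w) (y1 + y2) \<le> val v y1 + val w y2"
        unfolding val_def by (simp add: distrib_left)
      moreover have "q (v + w) \<le> val (v + w) (y1 + y2)" by (rule q_le[OF y12])
      ultimately show "q (v + w) \<le> q v + q w + e" using y1 y2 by linarith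
    qed
  next
    fix c :: real and v assume c: "c > 0"
    show "q (c *\<^sub>R v) \<le> c * q v"
    proof (rule field_le_epsilon)
      fix e :: real assume e: "e > 0"
      obtain y where y: "y \<in> D" "val v y < q v + e/c" using q_lt[of "e/c" v] e c by auto
      have "g (c *\<^sub>R y) = ereal (c * gr y)" using g_hom[OF c, of y] grD[OF y(1)] by simp
      then have cy: "c *\<^sub>R y \<in> D" and gcy: "gr (c *\<^sub>R y) = c * gr y" by (auto simp: D_def gr_def)
      have "mink V (c *\<^sub>R v - c *\<^sub>R y) \<le> c * mink V (v - y)"
        using sublin_le[OF msl c, of "v - y"] by (simp add: scaleR_diff_right)
      then have "M * mink V (c *\<^sub>R v - c *\<^sub>R y) \<le> M * (c * mink V (v - y))"
        using M by (intro mult_left_mono) auto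
      then have "val (c *\<^sub>R v) (c *\<^sub>R y) \<le> c * val v y"
        using gcy unfolding val_def by (simp add: distrib_left mult.left_commute)
      moreover have "c * val v y \<le> c * q v + e" using y(2) c by (simp add: field_simps)
      moreover have "q (c *\<^sub>R v) \<le> val (c *\<^sub>R v) (c *\<^sub>R y)" by (rule q_le[OF cy])
      ultimately show "q (c *\<^sub>R v) \<le> c * q v + e" by linarith
    qed
  qed
  obtain F where F: "linear F" "\<And>v. F v \<le> q v" "F x = q x" using HB[OF qsl, of x] by blast
  have mk0: "mink V 0 = 0" by (rule sublin_0[OF msl])
  have Fg: "ereal (F v) \<le> g v" for v
  proof (cases "v \<in> D")
    case True
    have "q v \<le> val v v" by (rule q_le[OF True])
    then have "F v \<le> gr v" using F(2)[of v] mk0 by (simp add: val_def)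
    then show ?thesis using grD[OF True] by simp
  next
    case False then show ?thesis by (simp add: D_def)
  qed
  have FM: "F v \<le> M * mink V v" for v
    using F(2)[of v] q_le[OF D0, of v] gr0 by (simp add: val_def)
  have Fc: "continuous_map T euclideanreal F"
  proof (rule lin_cont[OF lt F(1) V(1,2,4)])
    show "\<forall>v\<in>V. F v \<le> M"
    proof
      fix v assume "v \<in> V"
      then have "mink V v \<le> 1" by (rule mk_in[OF V(3,2) ab])
      then have "M * mink V v \<le> M" using M by (simp add: mult_left_le)
      then show "F v \<le> M" using FM[of v] by linarith
    qed
  qed
  have "min a' (a + 1) \<le> q x" unfolding q_def
  proof (rule cINF_greatest[OF Dne])
    fix y assume y: "y \<in> D"
    show "min a' (a + 1) \<le> val x y"
    proof (cases "mink V (x - y) < 1")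
      case True
      then have "x - y \<in> V" by (rule mk_lt1[OF V(3,2) ab])
      then have "- (x - y) \<in> V" using V(4) by blast
      then have "y - x \<in> V" by simp
      then have "y \<in> Oset" using V(5) by (auto simp: U0_def)
      then have "a' < gr y" using grD[OF y] by (simp add: Oset_def)
      moreover have "0 \<le> M * mink V (x - y)" using M mk(1)[of "x - y"] by simp
      ultimately show ?thesis by (simp add: val_def)
    next
      case False
      have "xs (x - y) \<le> mink V (x - y)" by (rule xs_mk)
      then have "xs x - mink V (x - y) \<le> xs y" using linear_diff[OF xsl] by simp
      then have "xs x - mink V (x - y) + M * mink V (x - y) \<le> val x y"
        using grx[OF y] by (simp add: val_def)
      moreover have "(M - 1) * 1 \<le> (M - 1) * mink V (x - y)" using False M
        by (intro mult_left_mono) auto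
      ultimately have "xs x + (M - 1) \<le> val x y" by (simp add: algebra_simps)
      then show ?thesis using M by linarith
    qed
  qed
  then have "F x > a" using F(3) a' by linarith
  moreover have "F \<in> subdiff0 T g" using F(1) Fc Fg by (simp add: subdiff0_def dual_def)
  ultimately show ?thesis by blast
qed

end

instantiation "fun" :: (type, real_vector) real_vector
begin
definition scaleR_fun :: "real \<Rightarrow> ('a \<Rightarrow> 'b) \<Rightarrow> 'a \<Rightarrow> 'b" where
  "scaleR_fun c f = (\<lambda>x. c *\<^sub>R f x)"
instance by standard (auto simp: scaleR_fun_def fun_eq_iff scaleR_add_right scaleR_add_left)
end

lemma scaleR_fun_apply [simp]: "(c *\<^sub>R f) x = c *\<^sub>R f x" by (simp add: scaleR_fun_def)

lemma fun_sum_apply: "finite J \<Longrightarrow> (sum f J) z = (\<Sum>i\<in>J. f i z)"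
  by (induction J rule: finite_induct) auto

lemma cont_shift_ray:
  assumes \<tau>: "dual_lin_top T \<tau>" and xs: "xs \<in> topspace \<tau>" and u: "u \<in> topspace \<tau>"
  shows "continuous_map euclideanreal \<tau> (\<lambda>t. (\<lambda>y. xs y + t * u y))"
proof -
  have m1: "continuous_map euclideanreal (prod_topology euclideanreal \<tau>) (\<lambda>t. (t, u))"
    using u by (intro continuous_map_pairedI) auto
  have s: "continuous_map (prod_topology euclideanreal \<tau>) \<tau> (\<lambda>(t,f). (\<lambda>x. t * f x))"
    using \<tau> by (simp add: dual_lin_top_def)
  have "continuous_map euclideanreal \<tau> ((\<lambda>(t,f). (\<lambda>x. t * f x)) \<circ> (\<lambda>t. (t, u)))"
    by (rule continuous_map_compose[OF m1 s])
  then have m2: "continuous_map euclideanreal \<tau> (\<lambda>t. (\<lambda>x. t * u x))" by (simp add: o_def)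
  have m3: "continuous_map euclideanreal (prod_topology \<tau> \<tau>) (\<lambda>t. (xs, (\<lambda>x. t * u x)))"
    using xs m2 by (intro continuous_map_pairedI) auto
  have a: "continuous_map (prod_topology \<tau> \<tau>) \<tau> (\<lambda>(f,h). (\<lambda>x. f x + h x))"
    using \<tau> by (simp add: dual_lin_top_def)
  have "continuous_map euclideanreal \<tau> ((\<lambda>(f,h). (\<lambda>x. f x + h x)) \<circ> (\<lambda>t. (xs, (\<lambda>x. t * u x))))"
    by (rule continuous_map_compose[OF m3 a])
  then show ?thesis by (simp add: o_def)
qed

locale setting2 = setting +
  fixes xs :: "'a::real_vector \<Rightarrow> real"
  assumes xsd: "xs \<in> dual T"
begin

abbreviation "B \<equiv> subdiff0 T g"
abbreviation "K \<equiv> {(\<lambda>x. t * (c x - xs x)) | t c. t \<ge> (0::real) \<and> c \<in> B}"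

lemma xsl: "linear xs" using xsd by (rule dual_lin)

lemma B_dual: "B \<subseteq> dual T" by (auto simp: subdiff0_def)

lemma K_dual: "K \<subseteq> dual T"
proof
  fix k assume "k \<in> K"
  then obtain t c where k: "k = (\<lambda>x. t * (c x - xs x))" "c \<in> B" by blast
  have "(\<lambda>x. c x - xs x) \<in> dual T" using k(2) B_dual xsd by (intro dual_diff) auto
  then show "k \<in> dual T" unfolding k(1) by (rule dual_scale)
qed

lemma ws_top: "topspace (weak_star T) = dual T"
  by (simp add: weak_star_def)

lemma P4_P3:
  assumes "\<exists>\<tau>. dual_lin_top T \<tau> \<and> xs \<in> \<tau> interior_of B"
  shows "xs \<in> core_in (dual T) B"
proof -
  obtain \<tau> where \<tau>: "dual_lin_top T \<tau>" "xs \<in> \<tau> interior_of B" using assms by blast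
  have top: "topspace \<tau> = dual T" using \<tau>(1) by (simp add: dual_lin_top_def)
  have "\<tau> interior_of B \<subseteq> topspace \<tau>" by (rule interior_of_subset_topspace)
  then have xst: "xs \<in> topspace \<tau>" using \<tau>(2) by blast
  have "\<exists>\<delta>>0. \<forall>t\<in>{0..\<delta>}. (\<lambda>y. xs y + t * u y) \<in> B" if u: "u \<in> dual T" for u
  proof -
    have ut: "u \<in> topspace \<tau>" using u top by simp
    have c: "continuous_map euclideanreal \<tau> (\<lambda>t. (\<lambda>y. xs y + t * u y))"
      by (rule cont_shift_ray[OF \<tau>(1) xst ut])
    have "openin euclideanreal {t \<in> topspace euclideanreal. (\<lambda>y. xs y + t * u y) \<in> \<tau> interior_of B}"
      by (rule openin_continuous_map_preimage[OF c openin_interior_of])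
    then have op: "open {t. (\<lambda>y. xs y + t * u y) \<in> \<tau> interior_of B}" by simp
    have "(0::real) \<in> {t. (\<lambda>y. xs y + t * u y) \<in> \<tau> interior_of B}" using \<tau>(2) by simp
    then obtain e where e: "e > 0" "ball 0 e \<subseteq> {t. (\<lambda>y. xs y + t * u y) \<in> \<tau> interior_of B}"
      using op unfolding open_contains_ball by blast
    have all: "\<forall>t\<in>{0..e/2}. (\<lambda>y. xs y + t * u y) \<in> B"
    proof
      fix t assume "t \<in> {0..e/2}"
      then have "t \<in> ball 0 e" using e by (simp add: dist_real_def)
      then have "(\<lambda>y. xs y + t * u y) \<in> \<tau> interior_of B" using e by blast
      moreover have "\<tau> interior_of B \<subseteq> B" by (rule interior_of_subset)
      ultimately show "(\<lambda>y. xs y + t * u y) \<in> B" by (rule subsetD[rotated])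
    qed
    have e2: "e/2 > 0" using e by simp
    show ?thesis by (rule exI[of _ "e/2"], rule conjI[OF e2 all])
  qed
  then have H: "\<forall>u\<in>dual T. \<exists>\<delta>>0. \<forall>t\<in>{0..\<delta>}. (\<lambda>y. xs y + t * u y) \<in> B" by blast
  have "xs \<in> dual T" using xst top by simp
  then show ?thesis using H unfolding core_in_def by (rule CollectI[of _ xs, OF conjI])
qed

lemma P3_P2:
  assumes "xs \<in> core_in (dual T) B"
  shows "xs \<in> qi T B"
proof -
  have core: "\<And>u. u \<in> dual T \<Longrightarrow> \<exists>\<delta>>0. \<forall>t\<in>{0..\<delta>}. (\<lambda>y. xs y + t * u y) \<in> B"
    using assms by (simp add: core_in_def)
  obtain \<delta> where d: "\<delta> > 0" "\<forall>t\<in>{0..\<delta>}. (\<lambda>y. xs y + t * xs y) \<in> B" using core[OF xsd] by blast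
  have "(0::real) \<in> {0..\<delta>}" using d(1) by simp
  then have "(\<lambda>y. xs y + 0 * xs y) \<in> B" using d(2) by blast
  then have xsB: "xs \<in> B" by simp
  have "dual T \<subseteq> K"
  proof
    fix h assume h: "h \<in> dual T"
    obtain \<delta> where d: "\<delta> > 0" "\<forall>t\<in>{0..\<delta>}. (\<lambda>y. xs y + t * h y) \<in> B" using core[OF h] by blast
    have "\<delta> \<in> {0..\<delta>}" using d(1) by simp
    then have cB: "(\<lambda>y. xs y + \<delta> * h y) \<in> B" using d(2) by blast
    define c where "c = (\<lambda>y. xs y + \<delta> * h y)"
    have "h = (\<lambda>x. (1/\<delta>) * (c x - xs x))" using d(1) by (simp add: fun_eq_iff c_def)
    moreover have "(1/\<delta>) \<ge> 0" using d(1) by simp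
    moreover have "c \<in> B" using cB by (simp add: c_def)
    ultimately show "h \<in> K" by blast
  qed
  moreover have "K \<subseteq> weak_star T closure_of K"
    by (rule closure_of_subset) (simp add: ws_top K_dual)
  ultimately have "dual T \<subseteq> weak_star T closure_of K" by (rule order_trans)
  moreover have "weak_star T closure_of K \<subseteq> dual T"
    using closure_of_subset_topspace[of "weak_star T" K] ws_top by simp
  ultimately show ?thesis using xsB by (simp add: qi_def)
qed

end

lemma sum_delta_mult: "finite J \<Longrightarrow> i \<in> J \<Longrightarrow> (\<Sum>j\<in>J. v j * (if i = j then 1 else 0)) = (v i::real)"
proof -
  assume "finite J" "i \<in> J"
  have "(\<Sum>j\<in>J. v j * (if i = j then 1 else 0)) = (\<Sum>j\<in>J. if i = j then v j else 0)"
    by (rule sum.cong) auto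
  also have "\<dots> = v i" using \<open>finite J\<close> \<open>i \<in> J\<close> by (simp add: sum.delta)
  finally show ?thesis .
qed

lemma cone_sep:
  fixes p :: "'b::real_vector \<Rightarrow> real"
  assumes p: "sublin p" and pnn: "\<And>v. p v \<ge> 0" and K0: "0 \<in> K"
    and Kadd: "\<And>a b. a \<in> K \<Longrightarrow> b \<in> K \<Longrightarrow> a + b \<in> K"
    and Ksc: "\<And>a s. a \<in> K \<Longrightarrow> s > 0 \<Longrightarrow> s *\<^sub>R a \<in> K"
    and far: "\<And>k. k \<in> K \<Longrightarrow> p (z - k) \<ge> 1"
  shows "\<exists>F. linear F \<and> (\<forall>v. F v \<le> p v) \<and> (\<forall>k\<in>K. F k \<le> 0) \<and> F z \<ge> 1"
proof -
  define q where "q v = (INF k\<in>K. p (v - k))" for v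
  have Kne: "K \<noteq> {}" using K0 by blast
  have bdd: "bdd_below ((\<lambda>k. p (v - k)) ` K)" for v
    by (rule bdd_belowI[of _ 0]) (use pnn in auto)
  have q_le: "q v \<le> p (v - k)" if "k \<in> K" for v k
    unfolding q_def by (rule cINF_lower[OF bdd that])
  have q_lt: "\<exists>k\<in>K. p (v - k) < q v + e" if "e > 0" for v e
  proof -
    have "q v < q v + e" using that by simp
    then show ?thesis unfolding q_def using cINF_less_iff[OF Kne bdd] by blast
  qed
  have qsl: "sublin q"
    unfolding sublin_def
  proof (intro conjI allI impI)
    fix v w
    show "q (v + w) \<le> q v + q w"
    proof (rule field_le_epsilon)
      fix e :: real assume e: "e > 0"
      obtain k1 where k1: "k1 \<in> K" "p (v - k1) < q v + e/2" using q_lt[of "e/2" v] e by auto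
      obtain k2 where k2: "k2 \<in> K" "p (w - k2) < q w + e/2" using q_lt[of "e/2" w] e by auto
      have "q (v + w) \<le> p (v + w - (k1 + k2))" by (rule q_le[OF Kadd[OF k1(1) k2(1)]])
      also have "v + w - (k1 + k2) = (v - k1) + (w - k2)" by simp
      also have "p \<dots> \<le> p (v - k1) + p (w - k2)" by (rule sublin_add[OF p])
      finally show "q (v + w) \<le> q v + q w + e" using k1 k2 by linarith
    qed
  next
    fix c :: real and v assume c: "c > 0"
    show "q (c *\<^sub>R v) \<le> c * q v"
    proof (rule field_le_epsilon)
      fix e :: real assume e: "e > 0"
      obtain k where k: "k \<in> K" "p (v - k) < q v + e/c" using q_lt[of "e/c" v] e c by auto
      have "q (c *\<^sub>R v) \<le> p (c *\<^sub>R v - c *\<^sub>R k)" by (rule q_le[OF Ksc[OF k(1) c]])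
      also have "c *\<^sub>R v - c *\<^sub>R k = c *\<^sub>R (v - k)" by (simp add: scaleR_diff_right)
      also have "p \<dots> \<le> c * p (v - k)" by (rule sublin_le[OF p c])
      also have "\<dots> \<le> c * (q v + e/c)" using k(2) c by simp
      also have "\<dots> = c * q v + e" using c by (simp add: field_simps)
      finally show "q (c *\<^sub>R v) \<le> c * q v + e" .
    qed
  qed
  obtain F where F: "linear F" "\<And>v. F v \<le> q v" "F z = q z" using HB[OF qsl, of z] by blast
  have "1 \<le> q z" unfolding q_def by (rule cINF_greatest[OF Kne far])
  moreover have "F v \<le> p v" for v using F(2)[of v] q_le[OF K0, of v] by simp
  moreover have "F k \<le> 0" if "k \<in> K" for k
    using F(2)[of k] q_le[OF that, of k] sublin_0[OF p] by simp
  ultimately show ?thesis using F by auto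
qed

context setting2
begin

lemma P2_P1: assumes "xs \<in> qi T B" shows "below g xs = {0}"
proof -
  have xsB: "xs \<in> B" and cl: "weak_star T closure_of K = dual T" using assms by (simp_all add: qi_def)
  have "y = 0" if y: "y \<in> below g xs" for y
  proof (rule ccontr)
    assume y0: "y \<noteq> 0"
    obtain F where F: "F \<in> dual T" "F y \<ge> 1" using sep_point[OF y0] by blast
    have Fc: "F \<in> weak_star T closure_of K" using cl F(1) by simp
    have "openin (product_topology (\<lambda>_. euclideanreal) UNIV)
        {h \<in> topspace (product_topology (\<lambda>_. euclideanreal) UNIV). h y \<in> {0<..}}"
      by (rule openin_continuous_map_preimage[OF continuous_map_product_projection]) auto
    then have "openin (product_topology (\<lambda>_. euclideanreal) UNIV) {h. h y \<in> {0<..}}" by simp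
    then have op: "openin (weak_star T) ({h. h y \<in> {0<..}} \<inter> dual T)"
      unfolding weak_star_def openin_subtopology by (intro exI[of _ "{h. h y \<in> {0<..}}"] conjI refl)
    have Fin: "F \<in> {h. h y \<in> {0<..}} \<inter> dual T" using F by simp
    have "\<exists>k. k \<in> K \<and> k \<in> {h. h y \<in> {0<..}} \<inter> dual T"
      using Fc[unfolded in_closure_of, THEN conjunct2, rule_format, OF conjI[OF Fin op]] .
    then obtain k where k: "k \<in> K" "k \<in> {h. h y \<in> {0<..}} \<inter> dual T" by blast
    from k(1) obtain t c where tc: "k = (\<lambda>x. t * (c x - xs x))" "t \<ge> 0" "c \<in> B" by blast
    have "ereal (c y) \<le> g y" using tc(3) by (simp add: subdiff0_def)
    moreover have "g y \<le> ereal (xs y)" using y by (simp add: below_def)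
    ultimately have "ereal (c y) \<le> ereal (xs y)" by (rule order_trans)
    then have "c y - xs y \<le> 0" by simp
    then have "k y \<le> 0" using tc(1,2) by (simp add: mult_nonneg_nonpos)
    then show False using k(2) by simp
  qed
  moreover have "0 \<in> below g xs" using g0 linear_0[OF xsl] by (simp add: below_def)
  ultimately show ?thesis by auto
qed

lemma P1_xsB: assumes "below g xs = {0}" shows "xs \<in> B"
proof -
  have "ereal (xs y) \<le> g y" for y
  proof (cases "y = 0")
    case True then show ?thesis using g0 linear_0[OF xsl] by simp
  next
    case False
    then have "y \<notin> below g xs" using assms by blast
    then show ?thesis by (simp add: below_def)
  qed
  then show ?thesis using xsd by (simp add: subdiff0_def)
qed

lemma B_conv: assumes "c1 \<in> B" "c2 \<in> B" "a \<ge> 0" "b \<ge> 0" "a + b = 1"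
  shows "(\<lambda>x. a * c1 x + b * c2 x) \<in> B"
proof -
  have d: "(\<lambda>x. a * c1 x + b * c2 x) \<in> dual T"
    using assms B_dual by (intro dual_add dual_scale) auto
  have "ereal (a * c1 y + b * c2 y) \<le> g y" for y
  proof (cases "g y = \<infinity>")
    case True then show ?thesis by simp
  next
    case False
    then obtain r where r: "g y = ereal r" using g_nm[of y] by (cases "g y") auto
    have "ereal (c1 y) \<le> g y" "ereal (c2 y) \<le> g y" using assms(1,2) by (auto simp: subdiff0_def)
    then have "c1 y \<le> r" "c2 y \<le> r" using r by auto
    then have "a * c1 y + b * c2 y \<le> a * r + b * r" using assms(3,4)
      by (intro add_mono mult_left_mono) auto
    also have "\<dots> = r" using assms(5) by (simp add: distrib_right[symmetric])
    finally show ?thesis using r by simp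
  qed
  then show ?thesis using d by (simp add: subdiff0_def)
qed


lemma K_I: "t \<ge> 0 \<Longrightarrow> c \<in> B \<Longrightarrow> k = (\<lambda>x. t * (c x - xs x)) \<Longrightarrow> k \<in> K" by blast

lemma K0: assumes "xs \<in> B" shows "0 \<in> K"
  by (rule K_I[of 0 xs, OF _ assms]) (simp_all add: fun_eq_iff)

lemma K_add: assumes xsB: "xs \<in> B" and a: "a \<in> K" and b: "b \<in> K" shows "a + b \<in> K"
proof -
  from a obtain t1 c1 where 1: "a = (\<lambda>x. t1 * (c1 x - xs x))" "t1 \<ge> 0" "c1 \<in> B" by blast
  from b obtain t2 c2 where 2: "b = (\<lambda>x. t2 * (c2 x - xs x))" "t2 \<ge> 0" "c2 \<in> B" by blast
  show ?thesis
  proof (cases "t1 + t2 = 0")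
    case True
    then have "t1 = 0" "t2 = 0" using 1(2) 2(2) by auto
    then show ?thesis using 1(1) 2(1) by (intro K_I[of 0 xs, OF _ xsB]) (simp_all add: fun_eq_iff)
  next
    case False
    define s where "s = t1 + t2"
    have s: "s > 0" using False 1(2) 2(2) by (simp add: s_def)
    define c where "c = (\<lambda>x. (t1/s) * c1 x + (t2/s) * c2 x)"
    have cB: "c \<in> B" unfolding c_def using 1(2,3) 2(2,3) s
      by (intro B_conv) (simp_all add: s_def add_divide_distrib[symmetric])
    have st: "s * (t1/s) = t1" "s * (t2/s) = t2" using s by simp_all
    have "(a + b) x = s * (c x - xs x)" for x
    proof -
      have "s * (c x - xs x) = (s * (t1/s)) * c1 x + (s * (t2/s)) * c2 x - s * xs x"
        by (simp add: c_def algebra_simps)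
      also have "\<dots> = t1 * c1 x + t2 * c2 x - (t1 + t2) * xs x" using st by (simp add: s_def)
      finally show ?thesis using 1(1) 2(1) by (simp add: algebra_simps)
    qed
    then have "a + b = (\<lambda>x. s * (c x - xs x))" by (simp add: fun_eq_iff)
    then show ?thesis using s cB by (intro K_I[of s c]) simp_all
  qed
qed

lemma K_scale: assumes a: "a \<in> K" and r: "r > 0" shows "r *\<^sub>R a \<in> K"
proof -
  from a obtain t c where 1: "a = (\<lambda>x. t * (c x - xs x))" "t \<ge> 0" "c \<in> B" by blast
  have "r *\<^sub>R a = (\<lambda>x. (r * t) * (c x - xs x))" using 1(1) by (simp add: fun_eq_iff)
  then show ?thesis using 1 r by (intro K_I[of "r*t" c]) simp_all
qed

lemma P1_P2: assumes P1: "below g xs = {0}" shows "xs \<in> qi T B"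
proof -
  have xsB: "xs \<in> B" by (rule P1_xsB[OF P1])
  have "dual T \<subseteq> weak_star T closure_of K"
  proof
    fix h assume h: "h \<in> dual T"
    show "h \<in> weak_star T closure_of K"
      unfolding in_closure_of
    proof (intro conjI allI impI)
      show "h \<in> topspace (weak_star T)" using h ws_top by simp
      fix W assume W: "h \<in> W \<and> openin (weak_star T) W"
      then obtain W' where W': "openin (product_topology (\<lambda>_. euclideanreal) UNIV) W'" "W = W' \<inter> dual T"
        unfolding weak_star_def openin_subtopology by blast
      have hW': "h \<in> W'" using W W'(2) by blast
      have "\<exists>V. finite {i \<in> UNIV. V i \<noteq> topspace euclideanreal} \<and>
                 (\<forall>i \<in> UNIV. openin euclideanreal (V i)) \<and> h \<in> Pi\<^sub>E UNIV V \<and> Pi\<^sub>E UNIV V \<subseteq> W'"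
        using W'(1)[unfolded openin_product_topology_alt] hW' by blast
      then obtain V where V: "finite {i. V i \<noteq> UNIV}" "\<And>i. open (V i)" "h \<in> Pi\<^sub>E UNIV V"
          "Pi\<^sub>E UNIV V \<subseteq> W'" by auto
      define J where "J = {i. V i \<noteq> UNIV}"
      have J: "finite J" using V(1) by (simp add: J_def)
      have hV: "h i \<in> V i" for i using V(3) by (simp add: PiE_iff)
      have "\<forall>i\<in>J. \<exists>e>0. ball (h i) e \<subseteq> V i"
        using V(2) hV unfolding open_contains_ball by blast
      then obtain ee where ee: "\<And>i. i \<in> J \<Longrightarrow> ee i > 0 \<and> ball (h i) (ee i) \<subseteq> V i"
        by metis
      define \<epsilon> where "\<epsilon> = Min (insert 1 (ee ` J))"
      have \<epsilon>: "\<epsilon> > 0" unfolding \<epsilon>_def using J ee by (subst Min_gr_iff) auto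
      have \<epsilon>le: "\<epsilon> \<le> ee i" if "i \<in> J" for i unfolding \<epsilon>_def using J that by (intro Min_le) auto
      have box: "k \<in> W'" if kc: "\<And>i. i \<in> J \<Longrightarrow> \<bar>k i - h i\<bar> < \<epsilon>" for k
      proof -
        have "k i \<in> V i" for i
        proof (cases "i \<in> J")
          case True
          then have "dist (h i) (k i) < ee i" using kc[OF True] \<epsilon>le[OF True] by (simp add: dist_real_def)
          then show ?thesis using ee[OF True] by auto
        next
          case False then show ?thesis by (simp add: J_def)
        qed
        then have "k \<in> Pi\<^sub>E UNIV V" by (simp add: PiE_iff)
        then show ?thesis using V(4) by blast
      qed
      show "\<exists>y. y \<in> K \<and> y \<in> W"
      proof (rule ccontr)
        assume none: "\<not> (\<exists>y. y \<in> K \<and> y \<in> W)"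
        define p where "p v = (\<Sum>i\<in>J. \<bar>v i\<bar>) / \<epsilon>" for v :: "'a \<Rightarrow> real"
        have pnn: "p v \<ge> 0" for v using \<epsilon> by (simp add: p_def sum_nonneg)
        have psl: "sublin p" unfolding sublin_def
        proof (intro conjI allI impI)
          fix v w :: "'a \<Rightarrow> real"
          have "(\<Sum>i\<in>J. \<bar>(v + w) i\<bar>) \<le> (\<Sum>i\<in>J. \<bar>v i\<bar> + \<bar>w i\<bar>)"
            by (intro sum_mono) (simp add: abs_triangle_ineq)
          then show "p (v + w) \<le> p v + p w" using \<epsilon> unfolding p_def
            by (simp add: sum.distrib add_divide_distrib[symmetric] divide_right_mono)
        next
          fix c :: real and v :: "'a \<Rightarrow> real" assume c: "c > 0"
          have "(\<Sum>i\<in>J. \<bar>(c *\<^sub>R v) i\<bar>) = c * (\<Sum>i\<in>J. \<bar>v i\<bar>)"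
            using c by (simp add: abs_mult sum_distrib_left)
          then show "p (c *\<^sub>R v) \<le> c * p v" unfolding p_def by simp
        qed
        have far: "p (h - k) \<ge> 1" if k: "k \<in> K" for k
        proof (rule ccontr)
          assume "\<not> p (h - k) \<ge> 1"
          then have lt: "(\<Sum>i\<in>J. \<bar>(h - k) i\<bar>) < \<epsilon>" using \<epsilon> by (simp add: p_def)
          have "\<bar>k i - h i\<bar> < \<epsilon>" if i: "i \<in> J" for i
          proof -
            have "\<bar>(h - k) i\<bar> \<le> (\<Sum>i\<in>J. \<bar>(h - k) i\<bar>)"
              by (rule member_le_sum[OF i _ J]) simp
            then show ?thesis using lt by (simp add: abs_minus_commute)
          qed
          then have "k \<in> W'" by (rule box)
          moreover have "k \<in> dual T" using k K_dual by blast
          ultimately have "k \<in> W" using W'(2) by blast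
          then show False using none k by blast
        qed
        obtain F where F: "linear F" "\<And>v. F v \<le> p v" "\<And>k. k \<in> K \<Longrightarrow> F k \<le> 0" "F h \<ge> 1"
          using cone_sep[of p K h, OF psl pnn K0[OF xsB] K_add[OF xsB] K_scale far] by blast
        define dl where "dl i = (\<lambda>z. if z = i then (1::real) else 0)" for i :: 'a
        have rep: "F v = (\<Sum>i\<in>J. v i * F (dl i))" for v
        proof -
          define w where "w = v - (\<Sum>i\<in>J. v i *\<^sub>R dl i)"
          have w0: "w i = 0" if "i \<in> J" for i
            using that J by (simp add: w_def fun_sum_apply dl_def sum_delta_mult)
          have pw: "p w = 0" "p (- w) = 0" using w0 by (simp_all add: p_def)
          have "F w \<le> 0" using F(2)[of w] pw by simp
          moreover have "F (- w) \<le> 0" using F(2)[of "- w"] pw by simp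
          ultimately have "F w = 0" using linear_neg[OF F(1), of w] by simp
          moreover have "F w = F v - (\<Sum>i\<in>J. v i * F (dl i))"
            unfolding w_def using F(1) by (simp add: linear_diff linear_sum linear_scale)
          ultimately show ?thesis by simp
        qed
        define x0 where "x0 = (\<Sum>i\<in>J. F (dl i) *\<^sub>R i)"
        have ev: "k x0 = F k" if "linear k" for k
          unfolding x0_def rep[of k] using that by (simp add: linear_sum linear_scale mult.commute)
        have hx0: "h x0 \<ge> 1" using ev[OF dual_lin[OF h]] F(4) by simp
        have cx0: "c x0 \<le> xs x0" if c: "c \<in> B" for c
        proof -
          have "(\<lambda>x. 1 * (c x - xs x)) \<in> K" using c by (intro K_I[of 1 c]) simp_all
          then have kK: "(\<lambda>x. c x - xs x) \<in> K" by simp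
          have "linear (\<lambda>x. c x - xs x)" using c B_dual xsd by (intro dual_lin dual_diff) auto
          then have "c x0 - xs x0 = F (\<lambda>x. c x - xs x)" using ev by simp
          also have "\<dots> \<le> 0" by (rule F(3)[OF kK])
          finally show ?thesis by simp
        qed
        have "g x0 \<le> ereal (xs x0)"
        proof (rule ccontr)
          assume "\<not> g x0 \<le> ereal (xs x0)"
          then have "ereal (xs x0) < g x0" by simp
          then obtain c where "c \<in> B" "c x0 > xs x0" using fenchel[OF xsB] by blast
          then show False using cx0 by force
        qed
        then have "x0 \<in> below g xs" by (simp add: below_def)
        then have "x0 = 0" using P1 by blast
        then show False using hx0 linear_0[OF dual_lin[OF h]] by simp
      qed
    qed
  qed
  moreover have "weak_star T closure_of K \<subseteq> dual T"
    using closure_of_subset_topspace[of "weak_star T" K] ws_top by simp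
  ultimately show ?thesis using xsB by (simp add: qi_def)
qed

end

locale nsp =
  fixes N :: "'a::real_vector \<Rightarrow> real"
  assumes nN: "is_norm N"
begin

lemma N_add: "N (x + y) \<le> N x + N y" using nN by (simp add: is_norm_def)
lemma N_scale: "N (c *\<^sub>R x) = \<bar>c\<bar> * N x" using nN by (simp add: is_norm_def)
lemma N_zero: "N x = 0 \<Longrightarrow> x = 0" using nN by (simp add: is_norm_def)
lemma N_0: "N 0 = 0" using N_scale[of 0 0] by simp
lemma N_neg: "N (- x) = N x" using N_scale[of "-1" x] by simp
lemma N_nonneg: "N x \<ge> 0"
proof -
  have "N (x + - x) \<le> N x + N (- x)" by (rule N_add)
  then show ?thesis using N_0 N_neg[of x] by simp
qed
lemma N_sym: "N (x - y) = N (y - x)" using N_neg[of "x - y"] by simp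
lemma N_tri: "N (x - z) \<le> N (x - y) + N (y - z)"
  using N_add[of "x - y" "y - z"] by simp

definition nopen :: "'a set \<Rightarrow> bool" where
  "nopen U \<longleftrightarrow> (\<forall>x\<in>U. \<exists>e>0. \<forall>y. N (y - x) < e \<longrightarrow> y \<in> U)"

lemma istop: "istopology nopen"
  unfolding istopology_def
proof (intro conjI allI impI)
  fix S T assume S: "nopen S" and T: "nopen T"
  show "nopen (S \<inter> T)" unfolding nopen_def
  proof
    fix x assume "x \<in> S \<inter> T"
    then obtain e1 e2 where "e1 > 0" "\<forall>y. N (y - x) < e1 \<longrightarrow> y \<in> S" "e2 > 0" "\<forall>y. N (y - x) < e2 \<longrightarrow> y \<in> T"
      using S T unfolding nopen_def by blast
    then show "\<exists>e>0. \<forall>y. N (y - x) < e \<longrightarrow> y \<in> S \<inter> T"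
      by (intro exI[of _ "min e1 e2"]) auto
  qed
next
  fix K assume K: "\<forall>S\<in>K. nopen S"
  show "nopen (\<Union>K)" unfolding nopen_def
  proof
    fix x assume "x \<in> \<Union>K"
    then obtain S where "S \<in> K" "x \<in> S" by blast
    then obtain e where "e > 0" "\<forall>y. N (y - x) < e \<longrightarrow> y \<in> S" using K unfolding nopen_def by blast
    then show "\<exists>e>0. \<forall>y. N (y - x) < e \<longrightarrow> y \<in> \<Union>K" using \<open>S \<in> K\<close> by blast
  qed
qed

lemma openin_nt: "openin (norm_top N) U \<longleftrightarrow> (\<forall>x\<in>U. \<exists>e>0. \<forall>y. N (y - x) < e \<longrightarrow> y \<in> U)"
proof -
  have "norm_top N = topology nopen" unfolding norm_top_def nopen_def by simp
  then show ?thesis using istop by (simp add: nopen_def)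
qed

lemma nball_open: "openin (norm_top N) {y. N (y - x) < r}"
  unfolding openin_nt
proof
  fix y assume y: "y \<in> {y. N (y - x) < r}"
  show "\<exists>e>0. \<forall>z. N (z - y) < e \<longrightarrow> z \<in> {y. N (y - x) < r}"
  proof (intro exI conjI allI impI)
    show "r - N (y - x) > 0" using y by simp
    fix z assume "N (z - y) < r - N (y - x)"
    then show "z \<in> {y. N (y - x) < r}" using N_tri[of z x y] by simp
  qed
qed

lemma nt_top: "topspace (norm_top N) = UNIV"
proof -
  have "openin (norm_top N) UNIV" unfolding openin_nt by (auto intro: exI[of _ 1])
  then show ?thesis using openin_subset by blast
qed

definition bnd :: "('a \<Rightarrow> real) \<Rightarrow> bool" where
  "bnd f \<longleftrightarrow> (\<exists>C. \<forall>x. \<bar>f x\<bar> \<le> C * N x)"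

lemma dual_bnd: assumes "f \<in> dual (norm_top N)" shows "bnd f"
proof -
  have f: "linear f" "continuous_map (norm_top N) euclideanreal f" using assms by (auto simp: dual_def)
  have "openin (norm_top N) {x \<in> topspace (norm_top N). f x \<in> {-1<..<1}}"
    by (rule openin_continuous_map_preimage[OF f(2)]) auto
  then have "openin (norm_top N) {x. f x \<in> {-1<..<1}}" using nt_top by simp
  moreover have "0 \<in> {x. f x \<in> {-1<..<1}}" using linear_0[OF f(1)] by simp
  ultimately obtain e where e: "e > 0" "\<And>y. N (y - 0) < e \<Longrightarrow> y \<in> {x. f x \<in> {-1<..<1}}"
    unfolding openin_nt by blast
  have "\<bar>f x\<bar> \<le> (2 / e) * N x" for x
  proof (cases "N x = 0")
    case True then have "x = 0" by (rule N_zero)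
    then show ?thesis using linear_0[OF f(1)] N_0 by simp
  next
    case False
    then have Nx: "N x > 0" using N_nonneg[of x] by simp
    define y where "y = (e / (2 * N x)) *\<^sub>R x"
    have "N y = e / 2" using Nx e by (simp add: y_def N_scale)
    then have "N (y - 0) < e" using e by simp
    then have "y \<in> {x. f x \<in> {-1<..<1}}" by (rule e(2))
    then have "f y \<in> {-1<..<1}" by simp
    then have "\<bar>f y\<bar> < 1" by auto
    moreover have "f y = (e / (2 * N x)) * f x" by (simp add: y_def linear_scale[OF f(1)])
    ultimately have "\<bar>(e / (2 * N x)) * f x\<bar> < 1" by (simp only:)
    then have "(e / (2 * N x)) * \<bar>f x\<bar> < 1" using Nx e by (simp add: abs_mult)
    then have "\<bar>f x\<bar> < 2 * N x / e" using Nx e by (simp add: field_simps)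
    then show ?thesis by simp
  qed
  then show ?thesis unfolding bnd_def by blast
qed

lemma dn_ne: "{\<bar>f x\<bar> | x. N x \<le> 1} \<noteq> {}"
  using N_0 by (auto intro!: exI[of _ 0])

lemma dn_le: assumes "C \<ge> 0" "\<And>x. \<bar>f x\<bar> \<le> C * N x" shows "dual_norm N f \<le> C"
  unfolding dual_norm_def
proof (rule cSup_least[OF dn_ne])
  fix a assume "a \<in> {\<bar>f x\<bar> | x. N x \<le> 1}"
  then obtain x where x: "a = \<bar>f x\<bar>" "N x \<le> 1" by blast
  have "C * N x \<le> C * 1" using assms(1) x(2) by (intro mult_left_mono) auto
  then show "a \<le> C" using assms(2)[of x] x(1) by simp
qed

lemma dn_ge: assumes "bnd f" "linear f" shows "\<bar>f x\<bar> \<le> dual_norm N f * N x"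
proof -
  obtain C where C: "\<And>x. \<bar>f x\<bar> \<le> C * N x" using assms by (auto simp: bnd_def)
  have bdd: "bdd_above {\<bar>f x\<bar> | x. N x \<le> 1}"
  proof (rule bdd_aboveI[of _ "\<bar>C\<bar>"])
    fix a assume "a \<in> {\<bar>f x\<bar> | x. N x \<le> 1}"
    then obtain x where x: "a = \<bar>f x\<bar>" "N x \<le> 1" by blast
    have "C * N x \<le> \<bar>C\<bar> * N x" using N_nonneg[of x] by (intro mult_right_mono) auto
    also have "\<dots> \<le> \<bar>C\<bar> * 1" using x(2) by (intro mult_left_mono) auto
    finally show "a \<le> \<bar>C\<bar>" using C[of x] x(1) by simp
  qed
  show ?thesis
  proof (cases "N x = 0")
    case True
    then have "x = 0" by (rule N_zero)
    then have "f x = 0" using C[of x] N_0 by simp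
    then show ?thesis using True by simp
  next
    case False
    then have Nx: "N x > 0" using N_nonneg[of x] by simp
    define y where "y = inverse (N x) *\<^sub>R x"
    have "N y = 1" using Nx by (simp add: y_def N_scale)
    then have "\<bar>f y\<bar> \<le> dual_norm N f" unfolding dual_norm_def
      by (intro cSup_upper[OF _ bdd]) auto
    moreover have "\<bar>f y\<bar> = \<bar>f x\<bar> / N x"
      using Nx by (simp add: y_def linear_scale[OF assms(2)] abs_mult divide_inverse mult.commute)
    ultimately show ?thesis using Nx by (simp add: field_simps)
  qed
qed

end

context setting2
begin

lemma P6_P5:
  assumes nN: "is_norm N" and TN: "T = norm_top N" and a: "\<alpha> > 0"
    and H: "\<forall>x. g x - ereal (xs x) \<ge> ereal (\<alpha> * N x)"
  shows "\<exists>r>0. \<forall>h\<in>dual T. dual_norm N (\<lambda>x. h x - xs x) < r \<longrightarrow> h \<in> B"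
proof (intro exI[of _ \<alpha>] conjI ballI impI)
  interpret nsp N by (rule nsp.intro[OF nN])
  show "\<alpha> > 0" by (rule a)
  fix h assume h: "h \<in> dual T" and hl: "dual_norm N (\<lambda>x. h x - xs x) < \<alpha>"
  define f where "f = (\<lambda>x. h x - xs x)"
  have fd: "f \<in> dual T" unfolding f_def by (rule dual_diff[OF h xsd])
  have fb: "bnd f" using dual_bnd fd TN by simp
  have fl: "linear f" using fd by (rule dual_lin)
  have "ereal (h x) \<le> g x" for x
  proof (cases "g x = \<infinity>")
    case True then show ?thesis by simp
  next
    case False
    then obtain s where s: "g x = ereal s" using g_nm[of x] by (cases "g x") auto
    have "ereal (\<alpha> * N x) \<le> ereal s - ereal (xs x)" using H s by metis
    then have 1: "\<alpha> * N x \<le> s - xs x" by simp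
    have "f x \<le> \<bar>f x\<bar>" by simp
    also have "\<dots> \<le> dual_norm N f * N x" by (rule dn_ge[OF fb fl])
    also have "\<dots> \<le> \<alpha> * N x" using hl N_nonneg[of x] unfolding f_def
      by (intro mult_right_mono) auto
    finally have "h x - xs x \<le> s - xs x" using 1 by (simp add: f_def)
    then show ?thesis using s by simp
  qed
  then show "h \<in> B" using h by (simp add: subdiff0_def)
qed

lemma P5_P6:
  assumes nN: "is_norm N" and TN: "T = norm_top N" and r: "r > 0"
    and H: "\<forall>h\<in>dual T. dual_norm N (\<lambda>x. h x - xs x) < r \<longrightarrow> h \<in> B"
  shows "\<exists>\<alpha>>0. \<forall>x. g x - ereal (xs x) \<ge> ereal (\<alpha> * N x)"
proof (intro exI[of _ "r/2"] conjI allI)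
  interpret nsp N by (rule nsp.intro[OF nN])
  show "r/2 > 0" using r by simp
  fix x
  have Nsl: "sublin N" unfolding sublin_def using N_add N_scale by simp
  obtain F where F: "linear F" "\<And>v. F v \<le> N v" "F x = N x" using HB[OF Nsl, of x] by blast
  have Fabs: "\<bar>F v\<bar> \<le> N v" for v
  proof -
    have "- F v = F (- v)" using linear_neg[OF F(1)] by simp
    also have "\<dots> \<le> N v" using F(2)[of "-v"] N_neg by simp
    finally show ?thesis using F(2)[of v] by linarith
  qed
  have "continuous_map (norm_top N) euclideanreal F"
  proof (rule cont_real_crit)
    fix x0 and e :: real assume e: "e > 0"
    show "\<exists>W. openin (norm_top N) W \<and> x0 \<in> W \<and> (\<forall>y\<in>W. \<bar>F y - F x0\<bar> < e)"
    proof (intro exI conjI ballI)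
      show "openin (norm_top N) {y. N (y - x0) < e}" by (rule nball_open)
      show "x0 \<in> {y. N (y - x0) < e}" using e N_0 by simp
      fix y assume "y \<in> {y. N (y - x0) < e}"
      then show "\<bar>F y - F x0\<bar> < e" using Fabs[of "y - x0"] linear_diff[OF F(1)] by simp
    qed
  qed
  then have Fd: "F \<in> dual T" using F(1) TN by (simp add: dual_def)
  define h where "h = (\<lambda>y. xs y + (r/2) * F y)"
  have hd: "h \<in> dual T" unfolding h_def by (intro dual_add[OF xsd] dual_scale[OF Fd])
  have "dual_norm N (\<lambda>y. h y - xs y) \<le> r/2"
  proof (rule dn_le)
    show "r/2 \<ge> 0" using r by simp
    fix y show "\<bar>h y - xs y\<bar> \<le> r / 2 * N y"
      using Fabs[of y] r by (simp add: h_def abs_mult)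
  qed
  then have "h \<in> B" using H hd r by simp
  then have "ereal (h x) \<le> g x" by (simp add: subdiff0_def)
  then have hx: "ereal (xs x + r/2 * N x) \<le> g x" using F(3) by (simp add: h_def)
  show "ereal (r / 2 * N x) \<le> g x - ereal (xs x)"
  proof (cases "g x")
    case (real s) then show ?thesis using hx by simp
  next
    case PInf then show ?thesis by simp
  next
    case MInf then show ?thesis using g_nm[of x] by simp
  qed
qed

end

context nsp
begin

lemma dn_nonneg: assumes "bnd f" "linear f" shows "0 \<le> dual_norm N f"
proof -
  obtain C where C: "\<And>x. \<bar>f x\<bar> \<le> C * N x" using assms by (auto simp: bnd_def)
  have bdd: "bdd_above {\<bar>f x\<bar> | x. N x \<le> 1}"
  proof (rule bdd_aboveI[of _ "\<bar>C\<bar>"])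
    fix a assume "a \<in> {\<bar>f x\<bar> | x. N x \<le> 1}"
    then obtain x where x: "a = \<bar>f x\<bar>" "N x \<le> 1" by blast
    have "C * N x \<le> \<bar>C\<bar> * N x" using N_nonneg[of x] by (intro mult_right_mono) auto
    also have "\<dots> \<le> \<bar>C\<bar> * 1" using x(2) by (intro mult_left_mono) auto
    finally show "a \<le> \<bar>C\<bar>" using C[of x] x(1) by simp
  qed
  have "\<bar>f 0\<bar> \<le> dual_norm N f" unfolding dual_norm_def
    by (intro cSup_upper[OF _ bdd]) (auto simp: N_0)
  then show ?thesis using linear_0[OF assms(2)] by simp
qed

end

context setting2
begin

lemma P5_P4:
  assumes nN: "is_norm N" and TN: "T = norm_top N" and r: "r > 0"
    and H: "\<forall>h\<in>dual T. dual_norm N (\<lambda>x. h x - xs x) < r \<longrightarrow> h \<in> B"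
  shows "\<exists>\<tau>. dual_lin_top T \<tau> \<and> xs \<in> \<tau> interior_of B"
proof -
  interpret nsp N by (rule nsp.intro[OF nN])
  have bl: "bnd f \<and> linear f" if "f \<in> dual T" for f
    using that dual_bnd[of f] TN dual_lin[OF that] by simp
  define dn where "dn f h = dual_norm N (\<lambda>x. h x - f x)" for f h :: "'a \<Rightarrow> real"
  have dnn: "dn f h \<ge> 0" if a1: "f \<in> dual T" and a2: "h \<in> dual T" for f h
  proof -
    have "bnd (\<lambda>x. h x - f x) \<and> linear (\<lambda>x. h x - f x)" by (rule bl[OF dual_diff[OF a2 a1]])
    then have "0 \<le> dual_norm N (\<lambda>x. h x - f x)" using dn_nonneg by blast
    then show ?thesis by (simp add: dn_def)
  qed
  have dnge: "\<bar>h x - f x\<bar> \<le> dn f h * N x" if a1: "f \<in> dual T" and a2: "h \<in> dual T" for f h x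
  proof -
    have "bnd (\<lambda>x. h x - f x) \<and> linear (\<lambda>x. h x - f x)" by (rule bl[OF dual_diff[OF a2 a1]])
    then have "\<bar>h x - f x\<bar> \<le> dual_norm N (\<lambda>x. h x - f x) * N x" using dn_ge[of "\<lambda>x. h x - f x" x] by blast
    then show ?thesis by (simp add: dn_def)
  qed
  have dntri: "dn f k \<le> dn f h + dn h k" if "f \<in> dual T" "h \<in> dual T" "k \<in> dual T" for f h k
  proof -
    have "dual_norm N (\<lambda>x. k x - f x) \<le> dn h k + dn f h"
    proof (rule dn_le)
      show "0 \<le> dn h k + dn f h" using dnn that by (metis add_nonneg_nonneg)
      fix x
      have "\<bar>k x - f x\<bar> \<le> \<bar>k x - h x\<bar> + \<bar>h x - f x\<bar>" by simp
      also have "\<dots> \<le> dn h k * N x + dn f h * N x" using dnge that by (intro add_mono) auto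
      finally show "\<bar>k x - f x\<bar> \<le> (dn h k + dn f h) * N x" by (simp add: algebra_simps)
    qed
    then show ?thesis by (simp add: dn_def)
  qed
  have dnsym: "dn f h = dn h f" for f h
  proof -
    have "{\<bar>h x - f x\<bar> | x. N x \<le> 1} = {\<bar>f x - h x\<bar> | x. N x \<le> 1}" by (simp add: abs_minus_commute)
    then show ?thesis by (simp add: dn_def dual_norm_def)
  qed
  have dn0: "dn f f = 0" if "f \<in> dual T" for f
  proof -
    have "dual_norm N (\<lambda>x. f x - f x) \<le> 0" by (rule dn_le) auto
    then have "dn f f \<le> 0" by (simp add: dn_def)
    then show ?thesis using dnn[OF that that] by simp
  qed
  define P where "P U \<longleftrightarrow> U \<subseteq> dual T \<and> (\<forall>f\<in>U. \<exists>e>0. \<forall>h\<in>dual T. dn f h < e \<longrightarrow> h \<in> U)" for U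
  have istP: "istopology P"
    unfolding istopology_def
  proof (intro conjI allI impI)
    fix S U assume S: "P S" and U: "P U"
    show "P (S \<inter> U)" unfolding P_def
    proof (intro conjI ballI)
      show "S \<inter> U \<subseteq> dual T" using S by (auto simp: P_def)
      fix f assume "f \<in> S \<inter> U"
      then obtain e1 e2 where "e1 > 0" "\<forall>h\<in>dual T. dn f h < e1 \<longrightarrow> h \<in> S" "e2 > 0" "\<forall>h\<in>dual T. dn f h < e2 \<longrightarrow> h \<in> U"
        using S U unfolding P_def by blast
      then show "\<exists>e>0. \<forall>h\<in>dual T. dn f h < e \<longrightarrow> h \<in> S \<inter> U"
        by (intro exI[of _ "min e1 e2"]) auto
    qed
  next
    fix K assume K: "\<forall>S\<in>K. P S"
    show "P (\<Union>K)" unfolding P_def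
    proof (intro conjI ballI)
      show "\<Union>K \<subseteq> dual T" using K by (auto simp: P_def)
      fix f assume "f \<in> \<Union>K"
      then obtain S where S: "S \<in> K" "f \<in> S" by blast
      then obtain e where "e > 0" "\<forall>h\<in>dual T. dn f h < e \<longrightarrow> h \<in> S" using K unfolding P_def by blast
      then show "\<exists>e>0. \<forall>h\<in>dual T. dn f h < e \<longrightarrow> h \<in> \<Union>K" using S by blast
    qed
  qed
  define \<tau> where "\<tau> = topology P"
  have op\<tau>: "openin \<tau> U \<longleftrightarrow> P U" for U unfolding \<tau>_def using istP by simp
  have top\<tau>: "topspace \<tau> = dual T"
  proof -
    have "P (dual T)" unfolding P_def by (auto intro: exI[of _ 1])
    then have "openin \<tau> (dual T)" using op\<tau> by simp
    then have "dual T \<subseteq> topspace \<tau>" by (rule openin_subset)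
    moreover have "topspace \<tau> \<subseteq> dual T" unfolding topspace_def using op\<tau> P_def by auto
    ultimately show ?thesis by blast
  qed
  define ball\<tau> where "ball\<tau> f e = {h \<in> dual T. dn f h < e}" for f e
  have ball_open: "openin \<tau> (ball\<tau> f e)" if f: "f \<in> dual T" for f e
    unfolding op\<tau> P_def ball\<tau>_def
  proof (intro conjI ballI)
    show "{h \<in> dual T. dn f h < e} \<subseteq> dual T" by blast
    fix h assume h: "h \<in> {h \<in> dual T. dn f h < e}"
    show "\<exists>e'>0. \<forall>k\<in>dual T. dn h k < e' \<longrightarrow> k \<in> {h \<in> dual T. dn f h < e}"
    proof (intro exI conjI ballI impI)
      show "e - dn f h > 0" using h by simp
      fix k assume k: "k \<in> dual T" "dn h k < e - dn f h"
      have "dn f k \<le> dn f h + dn h k" using dntri f h k(1) by blast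
      then show "k \<in> {h \<in> dual T. dn f h < e}" using k by simp
    qed
  qed
  have ball_cen: "f \<in> ball\<tau> f e" if "f \<in> dual T" "e > 0" for f e
    using dn0 that by (simp add: ball\<tau>_def)
  have lin: "dual_lin_top T \<tau>"
    unfolding dual_lin_top_def
  proof (intro conjI)
    show "topspace \<tau> = dual T" by (rule top\<tau>)
    show "continuous_map (prod_topology \<tau> \<tau>) \<tau> (\<lambda>(f,h). (\<lambda>x. f x + h x))"
      unfolding continuous_map_def
    proof (intro conjI allI impI)
      show "(\<lambda>(f,h). (\<lambda>x. f x + h x)) \<in> topspace (prod_topology \<tau> \<tau>) \<rightarrow> topspace \<tau>"
        using top\<tau> dual_add by auto
      fix U assume U: "openin \<tau> U"
      show "openin (prod_topology \<tau> \<tau>) {z \<in> topspace (prod_topology \<tau> \<tau>). (\<lambda>(f,h). (\<lambda>x. f x + h x)) z \<in> U}"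
        unfolding openin_prod_topology_alt
      proof (intro allI impI)
        fix f h assume fh: "(f, h) \<in> {z \<in> topspace (prod_topology \<tau> \<tau>). (\<lambda>(f,h). (\<lambda>x. f x + h x)) z \<in> U}"
        then have f: "f \<in> dual T" and h: "h \<in> dual T" and fhU: "(\<lambda>x. f x + h x) \<in> U" using top\<tau> by auto
        obtain e where e: "e > 0" "\<And>k. k \<in> dual T \<Longrightarrow> dn (\<lambda>x. f x + h x) k < e \<Longrightarrow> k \<in> U"
          using U fhU unfolding op\<tau> P_def by blast
        show "\<exists>U1 V1. openin \<tau> U1 \<and> openin \<tau> V1 \<and> f \<in> U1 \<and> h \<in> V1 \<and> U1 \<times> V1 \<subseteq>
            {z \<in> topspace (prod_topology \<tau> \<tau>). (\<lambda>(f,h). (\<lambda>x. f x + h x)) z \<in> U}"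
        proof (intro exI conjI)
          show "openin \<tau> (ball\<tau> f (e/2))" "openin \<tau> (ball\<tau> h (e/2))" using ball_open f h by auto
          show "f \<in> ball\<tau> f (e/2)" "h \<in> ball\<tau> h (e/2)" using ball_cen f h e by auto
          show "ball\<tau> f (e/2) \<times> ball\<tau> h (e/2) \<subseteq> {z \<in> topspace (prod_topology \<tau> \<tau>). (\<lambda>(f,h). (\<lambda>x. f x + h x)) z \<in> U}"
          proof (clarsimp)
            fix f' h' assume f': "f' \<in> ball\<tau> f (e/2)" and h': "h' \<in> ball\<tau> h (e/2)"
            then have f'd: "f' \<in> dual T" and h'd: "h' \<in> dual T" and df: "dn f f' < e/2" and dh: "dn h h' < e/2"
              by (auto simp: ball\<tau>_def)
            have sd: "(\<lambda>x. f' x + h' x) \<in> dual T" using dual_add[OF f'd h'd] .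
            have "dual_norm N (\<lambda>x. f' x + h' x - (f x + h x)) \<le> dn f f' + dn h h'"
            proof (rule dn_le)
              show "0 \<le> dn f f' + dn h h'" using dnn f h f'd h'd by (metis add_nonneg_nonneg)
              fix x
              have "\<bar>f' x + h' x - (f x + h x)\<bar> \<le> \<bar>f' x - f x\<bar> + \<bar>h' x - h x\<bar>" by simp
              also have "\<dots> \<le> dn f f' * N x + dn h h' * N x" using dnge f h f'd h'd by (intro add_mono) auto
              finally show "\<bar>f' x + h' x - (f x + h x)\<bar> \<le> (dn f f' + dn h h') * N x"
                by (simp add: algebra_simps)
            qed
            then have "dn (\<lambda>x. f x + h x) (\<lambda>x. f' x + h' x) \<le> dn f f' + dn h h'" by (simp add: dn_def)
            then have "(\<lambda>x. f' x + h' x) \<in> U" using e(2)[OF sd] df dh by simp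
            then show "f' \<in> topspace \<tau> \<and> h' \<in> topspace \<tau> \<and> (\<lambda>x. f' x + h' x) \<in> U"
              using f'd h'd top\<tau> by simp
          qed
        qed
      qed
    qed
    show "continuous_map (prod_topology euclideanreal \<tau>) \<tau> (\<lambda>(t,f). (\<lambda>x. t * f x))"
      unfolding continuous_map_def
    proof (intro conjI allI impI)
      show "(\<lambda>(t,f). (\<lambda>x. t * f x)) \<in> topspace (prod_topology euclideanreal \<tau>) \<rightarrow> topspace \<tau>"
        using top\<tau> dual_scale by auto
      fix U assume U: "openin \<tau> U"
      show "openin (prod_topology euclideanreal \<tau>) {z \<in> topspace (prod_topology euclideanreal \<tau>). (\<lambda>(t,f). (\<lambda>x. t * f x)) z \<in> U}"
        unfolding openin_prod_topology_alt
      proof (intro allI impI)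
        fix t0 f0 assume tf: "(t0, f0) \<in> {z \<in> topspace (prod_topology euclideanreal \<tau>). (\<lambda>(t,f). (\<lambda>x. t * f x)) z \<in> U}"
        then have f0: "f0 \<in> dual T" and tfU: "(\<lambda>x. t0 * f0 x) \<in> U" using top\<tau> by auto
        obtain e where e: "e > 0" "\<And>k. k \<in> dual T \<Longrightarrow> dn (\<lambda>x. t0 * f0 x) k < e \<Longrightarrow> k \<in> U"
          using U tfU unfolding op\<tau> P_def by blast
        define D where "D = dual_norm N f0"
        have D: "D \<ge> 0" unfolding D_def using bl[OF f0] dn_nonneg by blast
        have Dge: "\<bar>f0 x\<bar> \<le> D * N x" for x unfolding D_def using bl[OF f0] dn_ge by blast
        define L where "L = \<bar>t0\<bar> + 1 + D"
        have L: "L > 0" using D by (simp add: L_def)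
        define \<delta> where "\<delta> = min 1 (e / (2 * L))"
        have \<delta>: "\<delta> > 0" "\<delta> \<le> 1" "\<delta> * L < e"
        proof -
          show "\<delta> > 0" "\<delta> \<le> 1" using e L by (auto simp: \<delta>_def)
          have "\<delta> * L \<le> (e / (2 * L)) * L" using L by (intro mult_right_mono) (auto simp: \<delta>_def)
          also have "\<dots> = e / 2" using L by simp
          finally show "\<delta> * L < e" using e by simp
        qed
        show "\<exists>U1 V1. openin euclideanreal U1 \<and> openin \<tau> V1 \<and> t0 \<in> U1 \<and> f0 \<in> V1 \<and> U1 \<times> V1 \<subseteq>
            {z \<in> topspace (prod_topology euclideanreal \<tau>). (\<lambda>(t,f). (\<lambda>x. t * f x)) z \<in> U}"
        proof (intro exI conjI)
          show "openin euclideanreal (ball t0 \<delta>)" by simp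
          show "openin \<tau> (ball\<tau> f0 \<delta>)" using ball_open f0 by auto
          show "t0 \<in> ball t0 \<delta>" using \<delta> by simp
          show "f0 \<in> ball\<tau> f0 \<delta>" using ball_cen f0 \<delta> by auto
          show "ball t0 \<delta> \<times> ball\<tau> f0 \<delta> \<subseteq> {z \<in> topspace (prod_topology euclideanreal \<tau>). (\<lambda>(t,f). (\<lambda>x. t * f x)) z \<in> U}"
          proof
            fix z assume z: "z \<in> ball t0 \<delta> \<times> ball\<tau> f0 \<delta>"
            then obtain t f where zz: "z = (t, f)" and t: "t \<in> ball t0 \<delta>" and f: "f \<in> ball\<tau> f0 \<delta>" by blast
            from t f have fd: "f \<in> dual T" and df: "dn f0 f < \<delta>" and dt: "\<bar>t - t0\<bar> < \<delta>"
              by (auto simp: ball\<tau>_def dist_real_def abs_minus_commute)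
            have tb: "\<bar>t\<bar> \<le> \<bar>t0\<bar> + 1" using dt \<delta> by linarith
            have sd: "(\<lambda>x. t * f x) \<in> dual T" using dual_scale[OF fd] .
            have "dual_norm N (\<lambda>x. t * f x - t0 * f0 x) \<le> \<delta> * L"
            proof (rule dn_le)
              show "0 \<le> \<delta> * L" using \<delta> L by simp
              fix x
              have "t * f x - t0 * f0 x = t * (f x - f0 x) + (t - t0) * f0 x" by (simp add: algebra_simps)
              then have "\<bar>t * f x - t0 * f0 x\<bar> \<le> \<bar>t\<bar> * \<bar>f x - f0 x\<bar> + \<bar>t - t0\<bar> * \<bar>f0 x\<bar>"
                by (metis abs_mult abs_triangle_ineq)
              also have "\<dots> \<le> (\<bar>t0\<bar> + 1) * (\<delta> * N x) + \<delta> * (D * N x)"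
              proof (intro add_mono mult_mono)
                show "\<bar>t\<bar> \<le> \<bar>t0\<bar> + 1" by (rule tb)
                have "\<bar>f x - f0 x\<bar> \<le> dn f0 f * N x" by (rule dnge[OF f0 fd])
                also have "\<dots> \<le> \<delta> * N x" using df N_nonneg[of x] by (intro mult_right_mono) auto
                finally show "\<bar>f x - f0 x\<bar> \<le> \<delta> * N x" .
                show "\<bar>t - t0\<bar> \<le> \<delta>" using dt by simp
                show "\<bar>f0 x\<bar> \<le> D * N x" by (rule Dge)
              qed (use \<delta> D N_nonneg[of x] in auto)
              also have "\<dots> = (\<delta> * L) * N x" by (simp add: L_def algebra_simps)
              finally show "\<bar>t * f x - t0 * f0 x\<bar> \<le> \<delta> * L * N x" .
            qed
            then have "dn (\<lambda>x. t0 * f0 x) (\<lambda>x. t * f x) \<le> \<delta> * L" by (simp add: dn_def)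
            then have "(\<lambda>x. t * f x) \<in> U" using e(2)[OF sd] \<delta>(3) by simp
            then show "z \<in> {z \<in> topspace (prod_topology euclideanreal \<tau>). (\<lambda>(t,f). (\<lambda>x. t * f x)) z \<in> U}"
              using fd top\<tau> zz by simp
          qed
        qed
      qed
    qed
  qed
  have "ball\<tau> xs r \<subseteq> B"
  proof
    fix h assume "h \<in> ball\<tau> xs r"
    then have "h \<in> dual T" "dual_norm N (\<lambda>x. h x - xs x) < r" by (auto simp: ball\<tau>_def dn_def)
    then show "h \<in> B" using H by blast
  qed
  then have "ball\<tau> xs r \<subseteq> \<tau> interior_of B" by (rule interior_of_maximal[OF _ ball_open[OF xsd]])
  moreover have "xs \<in> ball\<tau> xs r" using ball_cen[OF xsd r] .
  ultimately show ?thesis using lin by blast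
qed

end

lemma lt_cont_add: assumes "lin_top T" "continuous_map X T f" "continuous_map X T g"
  shows "continuous_map X T (\<lambda>x. f x + g x)"
proof -
  have "continuous_map X (prod_topology T T) (\<lambda>x. (f x, g x))"
    using assms by (intro continuous_map_pairedI)
  moreover have "continuous_map (prod_topology T T) T (\<lambda>(x,y). x + y)"
    using assms by (simp add: lin_top_def)
  ultimately have "continuous_map X T ((\<lambda>(x,y). x + y) \<circ> (\<lambda>x. (f x, g x)))"
    by (rule continuous_map_compose)
  then show ?thesis by (simp add: o_def)
qed

lemma lt_cont_sum: assumes lt: "lin_top T" and I: "finite I"
  shows "(\<And>i. i \<in> I \<Longrightarrow> continuous_map X T (f i)) \<Longrightarrow> continuous_map X T (\<lambda>x. \<Sum>i\<in>I. f i x)"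
  using I
proof (induction I rule: finite_induct)
  case empty then show ?case using lt_top[OF lt] by simp
next
  case (insert a I)
  have "continuous_map X T (\<lambda>x. f a x + (\<Sum>i\<in>I. f i x))"
    using insert by (intro lt_cont_add[OF lt]) auto
  then show ?case using insert by simp
qed

locale fdim = setting2 +
  fixes E :: "'a set"
  assumes Efin: "finite E" and Eind: "independent E" and Espan: "span E = UNIV" and Ene: "E \<noteq> {}"
begin

definition Nf :: "'a \<Rightarrow> real" where "Nf x = (\<Sum>b\<in>E. \<bar>representation E x b\<bar>)"

lemma coords: "(\<Sum>b\<in>E. representation E x b *\<^sub>R b) = x"
  by (rule sum_representation_eq[OF Eind _ Efin]) (auto simp: Espan)

lemma rep_add: "representation E (x + y) = (\<lambda>b. representation E x b + representation E y b)"
  by (rule representation_add[OF Eind]) (auto simp: Espan)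

lemma rep_scale: "representation E (c *\<^sub>R x) = (\<lambda>b. c * representation E x b)"
  by (rule representation_scale[OF Eind]) (auto simp: Espan)

lemma coord_le: "b \<in> E \<Longrightarrow> \<bar>representation E x b\<bar> \<le> Nf x"
  unfolding Nf_def by (rule member_le_sum[OF _ _ Efin]) auto

lemma Nf_norm: "is_norm Nf"
  unfolding is_norm_def
proof (intro conjI allI impI)
  fix x y
  show "Nf (x + y) \<le> Nf x + Nf y"
    unfolding Nf_def rep_add sum.distrib[symmetric] by (intro sum_mono) (simp add: abs_triangle_ineq)
next
  fix c x
  show "Nf (c *\<^sub>R x) = \<bar>c\<bar> * Nf x"
    unfolding Nf_def rep_scale by (simp add: abs_mult sum_distrib_left)
next
  fix x assume "Nf x = 0"
  then have "\<forall>b\<in>E. \<bar>representation E x b\<bar> = 0" unfolding Nf_def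
    using sum_nonneg_eq_0_iff[OF Efin] by (metis abs_ge_zero)
  then have "(\<Sum>b\<in>E. representation E x b *\<^sub>R b) = 0" by simp
  then show "x = 0" using coords by simp
qed

definition phi :: "('a \<Rightarrow> real) \<Rightarrow> 'a" where "phi c = (\<Sum>b\<in>E. c b *\<^sub>R b)"

definition Cset :: "('a \<Rightarrow> real) set" where
  "Cset = {c. (\<Sum>b\<in>E. \<bar>c b\<bar>) = 1} \<inter> PiE UNIV (\<lambda>b. if b \<in> E then {-1..1} else {0})"

abbreviation "PT \<equiv> product_topology (\<lambda>_::'a. euclideanreal) UNIV"

lemma phi_cont: "continuous_map PT T phi"
proof -
  have "continuous_map PT T (\<lambda>c. \<Sum>b\<in>E. c b *\<^sub>R b)"
  proof (rule lt_cont_sum[OF lt Efin])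
    fix b assume "b \<in> E"
    have "continuous_map PT euclideanreal (\<lambda>c. c b)" by (rule continuous_map_product_projection) simp
    then have "continuous_map PT T ((\<lambda>t. t *\<^sub>R b) \<circ> (\<lambda>c. c b))"
      by (rule continuous_map_compose[OF _ lt_ray[OF lt]])
    then show "continuous_map PT T (\<lambda>c. c b *\<^sub>R b)" by (simp add: o_def)
  qed
  then show ?thesis unfolding phi_def[abs_def] .
qed

lemma Cset_compact: "compactin PT Cset"
proof -
  have cK: "compactin PT (PiE UNIV (\<lambda>b. if b \<in> E then {-1..1} else {0}))"
    by (subst compactin_PiE) auto
  have "continuous_map PT euclideanreal (\<lambda>c. \<Sum>b\<in>E. \<bar>c b\<bar>)"
    by (intro continuous_map_sum[OF Efin] continuous_map_real_abs continuous_map_product_projection) simp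
  then have "closedin PT {c \<in> topspace PT. (\<Sum>b\<in>E. \<bar>c b\<bar>) \<in> {1}}"
    by (rule closedin_continuous_map_preimage) simp
  then have "closedin PT {c. (\<Sum>b\<in>E. \<bar>c b\<bar>) = 1}" by simp
  then show ?thesis unfolding Cset_def by (rule closed_Int_compactin[OF _ cK])
qed

definition Sp :: "'a set" where "Sp = phi ` Cset"

lemma Sp_compact: "compactin T Sp"
  unfolding Sp_def by (rule image_compactin[OF Cset_compact phi_cont])

lemma Sp_nz: "0 \<notin> Sp"
proof
  assume "0 \<in> Sp"
  then obtain c where c: "c \<in> Cset" "phi c = 0" by (auto simp: Sp_def)
  have "\<not> dependent E" using Eind by simp
  then have "\<not> (\<exists>u. (\<exists>v\<in>E. u v \<noteq> 0) \<and> (\<Sum>v\<in>E. u v *\<^sub>R v) = 0)"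
    using dependent_finite[OF Efin] by simp
  then have "\<forall>v\<in>E. c v = 0" using c(2) by (auto simp: phi_def)
  then have "(\<Sum>b\<in>E. \<bar>c b\<bar>) = 0" by simp
  then show False using c(1) by (simp add: Cset_def)
qed

lemma Sp_unit: assumes "Nf x = 1" shows "x \<in> Sp"
proof -
  define c where "c = representation E x"
  have "c \<in> Cset" unfolding Cset_def
  proof
    show "c \<in> {c. (\<Sum>b\<in>E. \<bar>c b\<bar>) = 1}" using assms by (simp add: c_def Nf_def)
    have "c b \<in> (if b \<in> E then {-1..1} else {0})" for b
    proof (cases "b \<in> E")
      case True
      then have "\<bar>c b\<bar> \<le> 1" using coord_le[OF True, of x] assms by (simp add: c_def)
      then show ?thesis using True by (simp add: abs_le_iff)
    next
      case False
      then have "c b = 0" using representation_ne_zero[of E x b] by (auto simp: c_def)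
      then show ?thesis using False by simp
    qed
    then show "c \<in> PiE UNIV (\<lambda>b. if b \<in> E then {-1..1} else {0})" by (simp add: PiE_iff)
  qed
  moreover have "phi c = x" using coords by (simp add: phi_def c_def)
  ultimately show ?thesis unfolding Sp_def by blast
qed

end

context fdim
begin

lemma T_eq: "T = norm_top Nf"
proof -
  interpret nsp Nf by (rule nsp.intro[OF Nf_norm])
  have nE: "card E > 0" using Efin Ene by (simp add: card_gt_0_iff)
  show ?thesis unfolding topology_eq
  proof (intro allI iffI)
    fix U assume U: "openin T U"
    show "openin (norm_top Nf) U" unfolding openin_nt
    proof
      fix x assume x: "x \<in> U"
      have "openin T {u. u + x \<in> U}" by (rule lt_pre[OF lt lt_add[OF lt] U])
      moreover have "0 \<in> {u. u + x \<in> U}" using x by simp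
      ultimately obtain V where V: "openin T V" "0 \<in> V" "convex V" "V \<subseteq> {u. u + x \<in> U}"
        using hlcs_nbhd[OF hl] by blast
      have "\<forall>b\<in>E. \<exists>e>0. \<forall>t. \<bar>t\<bar> < e \<longrightarrow> t *\<^sub>R b \<in> V"
        using lt_ray_small[OF lt V(1,2)] by blast
      then obtain ee where ee: "\<And>b. b \<in> E \<Longrightarrow> ee b > 0 \<and> (\<forall>t. \<bar>t\<bar> < ee b \<longrightarrow> t *\<^sub>R b \<in> V)"
        by metis
      define n where "n = real (card E)"
      have n: "n > 0" using nE by (simp add: n_def)
      define e where "e = Min (ee ` E) / n"
      have Mpos: "Min (ee ` E) > 0" using Efin Ene ee by (subst Min_gr_iff) auto
      have e: "e > 0" using Mpos n by (simp add: e_def)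
      have Mle: "Min (ee ` E) \<le> ee b" if "b \<in> E" for b using Efin that by (intro Min_le) auto
      show "\<exists>e>0. \<forall>y. Nf (y - x) < e \<longrightarrow> y \<in> U"
      proof (intro exI conjI allI impI)
        show "e > 0" by (rule e)
        fix y assume y: "Nf (y - x) < e"
        define c where "c = representation E (y - x)"
        have inV: "(n * c b) *\<^sub>R b \<in> V" if b: "b \<in> E" for b
        proof -
          have "\<bar>c b\<bar> < e" using coord_le[OF b, of "y - x"] y by (simp add: c_def)
          then have "n * \<bar>c b\<bar> < n * e" using n by simp
          also have "n * e = Min (ee ` E)" using n by (simp add: e_def)
          also have "\<dots> \<le> ee b" by (rule Mle[OF b])
          finally have "\<bar>n * c b\<bar> < ee b" using n by (simp add: abs_mult)
          then show ?thesis using ee[OF b] by blast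
        qed
        have "(\<Sum>b\<in>E. (1/n) *\<^sub>R ((n * c b) *\<^sub>R b)) \<in> V"
        proof (rule convex_sum[OF Efin V(3)])
          show "(\<Sum>i\<in>E. 1/n) = 1" using n by (simp add: n_def)
          show "\<And>i. i \<in> E \<Longrightarrow> 0 \<le> 1/n" using n by simp
          show "\<And>i. i \<in> E \<Longrightarrow> (n * c i) *\<^sub>R i \<in> V" by (rule inV)
        qed
        moreover have "(\<Sum>b\<in>E. (1/n) *\<^sub>R ((n * c b) *\<^sub>R b)) = y - x"
        proof -
          have "(\<Sum>b\<in>E. (1/n) *\<^sub>R ((n * c b) *\<^sub>R b)) = (\<Sum>b\<in>E. c b *\<^sub>R b)"
            using n by (intro sum.cong) auto
          also have "\<dots> = y - x" unfolding c_def by (rule coords)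
          finally show ?thesis .
        qed
        ultimately have "y - x \<in> V" by simp
        then show "y \<in> U" using V(4) by auto
      qed
    qed
  next
    fix U assume U: "openin (norm_top Nf) U"
    have "Hausdorff_space T" using hl by (simp add: hlcs_def)
    then have "closedin T Sp" by (rule compactin_imp_closedin[OF _ Sp_compact])
    then have "openin T (topspace T - Sp)" by (rule openin_diff[OF openin_topspace])
    moreover have "0 \<in> topspace T - Sp" using Sp_nz lt_top[OF lt] by simp
    ultimately obtain V0 where V0: "openin T V0" "0 \<in> V0" "convex V0" "V0 \<subseteq> topspace T - Sp"
      using hlcs_nbhd[OF hl] by blast
    have small: "Nf v < 1" if v: "v \<in> V0" for v
    proof (rule ccontr)
      assume "\<not> Nf v < 1"
      then have Nv: "Nf v \<ge> 1" by simp
      have "(1 / Nf v) *\<^sub>R v + (1 - 1 / Nf v) *\<^sub>R 0 \<in> V0"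
        using Nv v V0(2) by (intro convexD[OF V0(3)]) auto
      then have w: "(1 / Nf v) *\<^sub>R v \<in> V0" by simp
      have "Nf ((1 / Nf v) *\<^sub>R v) = 1" using Nv by (simp add: N_scale)
      then have "(1 / Nf v) *\<^sub>R v \<in> Sp" by (rule Sp_unit)
      then show False using w V0(4) by blast
    qed
    show "openin T U"
    proof (subst openin_subopen, intro ballI)
      fix x assume x: "x \<in> U"
      obtain e where e: "e > 0" "\<And>y. Nf (y - x) < e \<Longrightarrow> y \<in> U" using U x unfolding openin_nt by blast
      define W where "W = {y. (1/e) *\<^sub>R (y + - x) \<in> V0}"
      have "openin T W" unfolding W_def
        using lt_pre[OF lt continuous_map_compose[OF lt_add[OF lt, of "-x"] lt_scale[OF lt, of "1/e"]] V0(1)]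
        by (simp add: o_def)
      moreover have "x \<in> W" using V0(2) by (simp add: W_def)
      moreover have "W \<subseteq> U"
      proof
        fix y assume "y \<in> W"
        then have "Nf ((1/e) *\<^sub>R (y - x)) < 1" using small by (simp add: W_def)
        moreover have "Nf ((1/e) *\<^sub>R (y - x)) = (1/e) * Nf (y - x)" using e by (simp add: N_scale)
        ultimately have "(1/e) * Nf (y - x) < 1" by simp
        then have "Nf (y - x) < e" using e by (simp add: field_simps)
        then show "y \<in> U" by (rule e(2))
      qed
      ultimately show "\<exists>W. openin T W \<and> x \<in> W \<and> W \<subseteq> U" by blast
    qed
  qed
qed

end

context fdim
begin

lemma alpha: assumes P1: "below g xs = {0}"
  shows "\<exists>\<delta>>0. \<forall>v\<in>Sp. ereal \<delta> \<le> g v - ereal (xs v)"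
proof -
  have pq: "\<exists>p q. xs v < p \<and> p < q \<and> ereal q < g v" if v: "v \<in> Sp" for v
  proof -
    have "v \<noteq> 0" using v Sp_nz by blast
    then have "v \<notin> below g xs" using P1 by blast
    then have "ereal (xs v) < g v" by (simp add: below_def)
    then obtain q where q: "ereal (xs v) < ereal q" "ereal q < g v" using ereal_dense2 by blast
    then show ?thesis by (intro exI[of _ "(xs v + q)/2"] exI[of _ q]) auto
  qed
  then obtain p q where PQ: "\<And>v. v \<in> Sp \<Longrightarrow> xs v < p v \<and> p v < q v \<and> ereal (q v) < g v" by metis
  define Ov where "Ov v = {y. ereal (q v) < g y} \<inter> {y. xs y \<in> {..<p v}}" for v
  have Oo: "openin T (Ov v)" for v unfolding Ov_def
    by (intro openin_Int g_open lt_pre_real[OF lt dual_cont[OF xsd]]) simp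
  have "Sp \<subseteq> \<Union>(Ov ` Sp)"
  proof
    fix v assume "v \<in> Sp" then show "v \<in> \<Union>(Ov ` Sp)" using PQ[of v] by (auto simp: Ov_def)
  qed
  then obtain F where F: "finite F" "F \<subseteq> Ov ` Sp" "Sp \<subseteq> \<Union>F"
    using Sp_compact Oo unfolding compactin_def by (metis (no_types, lifting) imageE)
  obtain F' where F': "F' \<subseteq> Sp" "finite F'" "F = Ov ` F'" using finite_subset_image[OF F(1,2)] by blast
  define \<delta> where "\<delta> = Min (insert 1 ((\<lambda>v. q v - p v) ` F'))"
  have \<delta>: "\<delta> > 0" unfolding \<delta>_def using F' PQ by (subst Min_gr_iff) auto
  have \<delta>le: "\<delta> \<le> q v - p v" if "v \<in> F'" for v unfolding \<delta>_def using F' that by (intro Min_le) auto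
  show ?thesis
  proof (intro exI conjI ballI)
    show "\<delta> > 0" by (rule \<delta>)
    fix y assume "y \<in> Sp"
    then obtain v where v: "v \<in> F'" "y \<in> Ov v" using F(3) F'(3) by blast
    then have 1: "ereal (q v) < g y" and 2: "xs y < p v" by (auto simp: Ov_def)
    show "ereal \<delta> \<le> g y - ereal (xs y)"
    proof (cases "g y")
      case (real s)
      then have "q v < s" using 1 by simp
      then show ?thesis using real 2 \<delta>le[OF v(1)] by simp
    next
      case PInf then show ?thesis by simp
    next
      case MInf then show ?thesis using g_nm[of y] by simp
    qed
  qed
qed

lemma fd_P6: assumes P1: "below g xs = {0}"
  shows "\<exists>N. is_norm N \<and> T = norm_top N \<and> (\<exists>\<alpha>>0. \<forall>x. g x - ereal (xs x) \<ge> ereal (\<alpha> * N x))"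
proof -
  interpret nsp Nf by (rule nsp.intro[OF Nf_norm])
  obtain \<delta> where \<delta>: "\<delta> > 0" "\<And>v. v \<in> Sp \<Longrightarrow> ereal \<delta> \<le> g v - ereal (xs v)" using alpha[OF P1] by blast
  have "g x - ereal (xs x) \<ge> ereal (\<delta> * Nf x)" for x
  proof (cases "x = 0")
    case True then show ?thesis using g0 linear_0[OF xsl] N_0 by simp
  next
    case False
    then have Nx: "Nf x > 0" using N_nonneg[of x] N_zero[of x] by force
    define v where "v = (1 / Nf x) *\<^sub>R x"
    have "Nf v = 1" using Nx by (simp add: v_def N_scale)
    then have vS: "v \<in> Sp" by (rule Sp_unit)
    have xv: "x = Nf x *\<^sub>R v" using Nx by (simp add: v_def)
    have gx: "g x = ereal (Nf x) * g v" using g_hom[OF Nx, of v] xv by simp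
    have xsx: "xs x = Nf x * xs v" using linear_scale[OF xsl, of "Nf x" v] xv by simp
    show ?thesis
    proof (cases "g v")
      case (real s)
      have "ereal \<delta> \<le> ereal s - ereal (xs v)" using \<delta>(2)[OF vS] real by simp
      then have "\<delta> \<le> s - xs v" by simp
      then have "Nf x * \<delta> \<le> Nf x * (s - xs v)" using Nx by (intro mult_left_mono) auto
      then show ?thesis using gx xsx real by (simp add: algebra_simps)
    next
      case PInf then show ?thesis using gx Nx by simp
    next
      case MInf then show ?thesis using g_nm[of v] by simp
    qed
  qed
  then show ?thesis using Nf_norm T_eq \<delta>(1) by blast
qed

end

theorem proposition10:
  fixes T :: "'a::real_vector topology" and g :: "'a \<Rightarrow> ereal" and xs :: "'a \<Rightarrow> real"
  assumes "hlcs T" and "\<exists>x::'a. x \<noteq> 0" and "Gamma T g" and "sublinear g" and "xs \<in> dual T"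
  shows "let
     P1 = (below g xs = {0});
     P2 = (xs \<in> qi T (subdiff0 T g));
     P3 = (xs \<in> core_in (dual T) (subdiff0 T g));
     P4 = (\<exists>\<tau>. dual_lin_top T \<tau> \<and> xs \<in> \<tau> interior_of subdiff0 T g);
     P5 = (\<exists>N. is_norm N \<and> T = norm_top N \<and>
             (\<exists>r>0. \<forall>h\<in>dual T. dual_norm N (\<lambda>x. h x - xs x) < r \<longrightarrow> h \<in> subdiff0 T g));
     P6 = (\<exists>N. is_norm N \<and> T = norm_top N \<and>
             (\<exists>\<alpha>>0. \<forall>x. g x - ereal (xs x) \<ge> ereal (\<alpha> * N x)))
   in (P6 \<longleftrightarrow> P5) \<and> (P5 \<longrightarrow> P4) \<and> (P4 \<longrightarrow> P3) \<and> (P3 \<longrightarrow> P2) \<and> (P2 \<longleftrightarrow> P1)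
      \<and> ((\<exists>B::'a set. finite B \<and> span B = UNIV) \<longrightarrow> P1 \<longrightarrow> P6)"
proof -
  interpret setting2 T g xs
    by (intro setting2.intro setting.intro setting2_axioms.intro) (use assms in auto)
  have e6_5: "(\<exists>N. is_norm N \<and> T = norm_top N \<and>
             (\<exists>\<alpha>>0. \<forall>x. g x - ereal (xs x) \<ge> ereal (\<alpha> * N x))) \<longleftrightarrow>
      (\<exists>N. is_norm N \<and> T = norm_top N \<and>
             (\<exists>r>0. \<forall>h\<in>dual T. dual_norm N (\<lambda>x. h x - xs x) < r \<longrightarrow> h \<in> subdiff0 T g))"
  proof
    assume "\<exists>N. is_norm N \<and> T = norm_top N \<and> (\<exists>\<alpha>>0. \<forall>x. g x - ereal (xs x) \<ge> ereal (\<alpha> * N x))"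
    then obtain N \<alpha> where N: "is_norm N" "T = norm_top N" "\<alpha> > 0" "\<forall>x. g x - ereal (xs x) \<ge> ereal (\<alpha> * N x)"
      by blast
    show "\<exists>N. is_norm N \<and> T = norm_top N \<and>
             (\<exists>r>0. \<forall>h\<in>dual T. dual_norm N (\<lambda>x. h x - xs x) < r \<longrightarrow> h \<in> subdiff0 T g)"
      using P6_P5[OF N] N(1,2) by blast
  next
    assume "\<exists>N. is_norm N \<and> T = norm_top N \<and>
             (\<exists>r>0. \<forall>h\<in>dual T. dual_norm N (\<lambda>x. h x - xs x) < r \<longrightarrow> h \<in> subdiff0 T g)"
    then obtain N r where N: "is_norm N" "T = norm_top N" "r > 0"
      "\<forall>h\<in>dual T. dual_norm N (\<lambda>x. h x - xs x) < r \<longrightarrow> h \<in> subdiff0 T g" by blast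
    show "\<exists>N. is_norm N \<and> T = norm_top N \<and> (\<exists>\<alpha>>0. \<forall>x. g x - ereal (xs x) \<ge> ereal (\<alpha> * N x))"
      using P5_P6[OF N] N(1,2) by blast
  qed
  have e5_4: "(\<exists>N. is_norm N \<and> T = norm_top N \<and>
             (\<exists>r>0. \<forall>h\<in>dual T. dual_norm N (\<lambda>x. h x - xs x) < r \<longrightarrow> h \<in> subdiff0 T g)) \<longrightarrow>
      (\<exists>\<tau>. dual_lin_top T \<tau> \<and> xs \<in> \<tau> interior_of subdiff0 T g)"
  proof
    assume "\<exists>N. is_norm N \<and> T = norm_top N \<and>
             (\<exists>r>0. \<forall>h\<in>dual T. dual_norm N (\<lambda>x. h x - xs x) < r \<longrightarrow> h \<in> subdiff0 T g)"
    then obtain N r where N: "is_norm N" "T = norm_top N" "r > 0"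
      "\<forall>h\<in>dual T. dual_norm N (\<lambda>x. h x - xs x) < r \<longrightarrow> h \<in> subdiff0 T g" by blast
    show "\<exists>\<tau>. dual_lin_top T \<tau> \<and> xs \<in> \<tau> interior_of subdiff0 T g" by (rule P5_P4[OF N])
  qed
  have e4_3: "(\<exists>\<tau>. dual_lin_top T \<tau> \<and> xs \<in> \<tau> interior_of subdiff0 T g) \<longrightarrow>
      xs \<in> core_in (dual T) (subdiff0 T g)"
    using P4_P3 by blast
  have e3_2: "xs \<in> core_in (dual T) (subdiff0 T g) \<longrightarrow> xs \<in> qi T (subdiff0 T g)"
    using P3_P2 by blast
  have e2_1: "xs \<in> qi T (subdiff0 T g) \<longleftrightarrow> below g xs = {0}"
    using P2_P1 P1_P2 by blast
  have fd: "(\<exists>B::'a set. finite B \<and> span B = UNIV) \<longrightarrow> below g xs = {0} \<longrightarrow>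
      (\<exists>N. is_norm N \<and> T = norm_top N \<and> (\<exists>\<alpha>>0. \<forall>x. g x - ereal (xs x) \<ge> ereal (\<alpha> * N x)))"
  proof (intro impI)
    assume "\<exists>B::'a set. finite B \<and> span B = UNIV" and P1: "below g xs = {0}"
    then obtain B0 :: "'a set" where B0: "finite B0" "span B0 = UNIV" by blast
    obtain E where E: "E \<subseteq> B0" "independent E" "B0 \<subseteq> span E"
      by (rule maximal_independent_subset)
    have "span B0 \<subseteq> span E" using E(3) by (rule span_minimal) (rule subspace_span)
    then have Es: "span E = UNIV" using B0(2) by auto
    have Ef: "finite E" using E(1) B0(1) by (rule finite_subset)
    have Ene: "E \<noteq> {}"
    proof
      assume "E = {}"
      then have "(UNIV::'a set) = {0}" using Es by simp
      then show False using assms(2) by auto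
    qed
    interpret fdim T g xs E
      by (intro fdim.intro fdim_axioms.intro) (use Ef E(2) Es Ene setting2_axioms in auto)
    show "\<exists>N. is_norm N \<and> T = norm_top N \<and> (\<exists>\<alpha>>0. \<forall>x. g x - ereal (xs x) \<ge> ereal (\<alpha> * N x))"
      by (rule fd_P6[OF P1])
  qed
  show ?thesis unfolding Let_def using e6_5 e5_4 e4_3 e3_2 e2_1 fd by blast
qed

end
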